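(* Assume $H_0$ satisfies TQO-1 and TQO-2. Let $q\le L^*$ and let $W=\sum_{A\in\mathcal{S}(q)}W_A$, where each $W_A$ acts on the square $A$, $[W_A,P]=0$ and $W_AP=0$ for all $A\in\mathcal{S}(q)$, and set $w=\max_{A\in\mathcal{S}(q)}\|W_A\|$. Then $W$ is relatively bounded by $H_0$ with constant $b=O(wq^2)$; that is, there is a constant $c$ independent of $L,q,w$ such that $\|W\psi\|\le c\,wq^2\,\|H_0\psi\|$ for all $\psi\in\mathcal{H}$.
   Context: Let $\Lambda=\mathbb{Z}_L\times\mathbb{Z}_L$ (periodic boundary conditions), each site $u$ carrying a finite-dimensional Hilbert space $\mathcal{H}_u$ of dimension $O(1)$, $\mathcal{H}=\bigotimes_u\mathcal{H}_u$. For $r\ge1$, $\mathcal{S}(r)$ is the set of all $r\times r$ square blocks of sites. An operator acts on $A$ if it is the identity outside $A$. $H_0=\sum_{A\in\mathcal{S}(2)}G_A$ with each $G_A$ acting on $A$, the $G_A$ pairwise commuting, $G_A\ge0$, $G_A^2\ge G_A$, and frustration-free: the ground subspace $P=\{\psi:G_A\psi=0\ \forall A\}$ is nonzero; $P$ also denotes its projector. $P_A$ is the projector onto $\ker G_A$, and for a square $B$, $P_B=\prod_{A\in\mathcal{S}(2),A\subseteq B}P_A$. There is a constant $c_0>0$ and an integer $L^*\ge c_0L$ such that: TQO-1: for every square $A\in\mathcal{S}(r)$, $r\le L^*$, and every operator $O_A$ acting on $A$, $PO_AP=zP$ for some $z\in\mathbb{C}$; TQO-2: for every such $A$, with $B\in\mathcal{S}(r+2)$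 the square containing $A$ and all its nearest neighbors, $\mathrm{Tr}_{\Lambda\setminus A}(P)$ and $\mathrm{Tr}_{\Lambda\setminus A}(P_B)$ have the same kernel. An operator $W$ is relatively bounded by $H$ with constant $b$ if $\|W\psi\|\le b\|H\psi\|$ for all $\psi$. *)

theory Defs
  imports Complex_Main
begin

text \<open>Sites are pairs of integers with coordinates in 0..L-1. A basis configuration
  assigns to each site u a local basis index below d u (and 0 off the region).
  The Hilbert space H is the space of functions cfgs -> complex; operators are
  matrices indexed by configurations.\<close>

type_synonym site = "int \<times> int"
type_synonym cfg = "site \<Rightarrow> nat"
type_synonym vec = "cfg \<Rightarrow> complex"
type_synonym op = "cfg \<Rightarrow> cfg \<Rightarrow> complex"

definition sites :: "nat \<Rightarrow> site set" where
  "sites L = {0..<int L} \<times> {0..<int L}"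

definition cfgs_on :: "(site \<Rightarrow> nat) \<Rightarrow> site set \<Rightarrow> cfg set" where
  "cfgs_on d S = {\<sigma>. (\<forall>u\<in>S. \<sigma> u < d u) \<and> (\<forall>u. u \<notin> S \<longrightarrow> \<sigma> u = 0)}"

definition cfgs :: "nat \<Rightarrow> (site \<Rightarrow> nat) \<Rightarrow> cfg set" where
  "cfgs L d = cfgs_on d (sites L)"

definition apply_op :: "nat \<Rightarrow> (site \<Rightarrow> nat) \<Rightarrow> op \<Rightarrow> vec \<Rightarrow> vec" where
  "apply_op L d M \<psi> = (\<lambda>\<sigma>. \<Sum>\<tau>\<in>cfgs L d. M \<sigma> \<tau> * \<psi> \<tau>)"

definition inner :: "nat \<Rightarrow> (site \<Rightarrow> nat) \<Rightarrow> vec \<Rightarrow> vec \<Rightarrow> complex" where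
  "inner L d \<phi> \<psi> = (\<Sum>\<sigma>\<in>cfgs L d. cnj (\<phi> \<sigma>) * \<psi> \<sigma>)"

definition vnorm :: "nat \<Rightarrow> (site \<Rightarrow> nat) \<Rightarrow> vec \<Rightarrow> real" where
  "vnorm L d \<psi> = sqrt (\<Sum>\<sigma>\<in>cfgs L d. (cmod (\<psi> \<sigma>))\<^sup>2)"

definition opnorm :: "nat \<Rightarrow> (site \<Rightarrow> nat) \<Rightarrow> op \<Rightarrow> real" where
  "opnorm L d M = Sup {vnorm L d (apply_op L d M \<psi>) | \<psi>. vnorm L d \<psi> \<le> 1}"

definition mmult :: "nat \<Rightarrow> (site \<Rightarrow> nat) \<Rightarrow> op \<Rightarrow> op \<Rightarrow> op" where
  "mmult L d M N = (\<lambda>\<sigma> \<tau>. if \<sigma> \<in> cfgs L d \<and> \<tau> \<in> cfgs L d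
      then (\<Sum>\<rho>\<in>cfgs L d. M \<sigma> \<rho> * N \<rho> \<tau>) else 0)"

definition idop :: "nat \<Rightarrow> (site \<Rightarrow> nat) \<Rightarrow> op" where
  "idop L d = (\<lambda>\<sigma> \<tau>. if \<sigma> = \<tau> \<and> \<sigma> \<in> cfgs L d then 1 else 0)"

definition adjoint :: "op \<Rightarrow> op" where
  "adjoint M = (\<lambda>\<sigma> \<tau>. cnj (M \<tau> \<sigma>))"

definition op_eq :: "nat \<Rightarrow> (site \<Rightarrow> nat) \<Rightarrow> op \<Rightarrow> op \<Rightarrow> bool" where
  "op_eq L d M N \<longleftrightarrow> (\<forall>\<sigma>\<in>cfgs L d. \<forall>\<tau>\<in>cfgs L d. M \<sigma> \<tau> = N \<sigma> \<tau>)"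

definition vec_eq :: "nat \<Rightarrow> (site \<Rightarrow> nat) \<Rightarrow> vec \<Rightarrow> vec \<Rightarrow> bool" where
  "vec_eq L d \<phi> \<psi> \<longleftrightarrow> (\<forall>\<sigma>\<in>cfgs L d. \<phi> \<sigma> = \<psi> \<sigma>)"

definition commute :: "nat \<Rightarrow> (site \<Rightarrow> nat) \<Rightarrow> op \<Rightarrow> op \<Rightarrow> bool" where
  "commute L d M N \<longleftrightarrow> op_eq L d (mmult L d M N) (mmult L d N M)"

definition psd :: "nat \<Rightarrow> (site \<Rightarrow> nat) \<Rightarrow> op \<Rightarrow> bool" where
  "psd L d M \<longleftrightarrow> (\<forall>\<psi>. inner L d \<psi> (apply_op L d M \<psi>) \<in> \<real> \<and>
                         0 \<le> Re (inner L d \<psi> (apply_op L d M \<psi>)))"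

definition op_le :: "nat \<Rightarrow> (site \<Rightarrow> nat) \<Rightarrow> op \<Rightarrow> op \<Rightarrow> bool" where
  "op_le L d M N \<longleftrightarrow> psd L d (\<lambda>\<sigma> \<tau>. N \<sigma> \<tau> - M \<sigma> \<tau>)"

definition kernel :: "nat \<Rightarrow> (site \<Rightarrow> nat) \<Rightarrow> op \<Rightarrow> vec set" where
  "kernel L d M = {\<psi>. vec_eq L d (apply_op L d M \<psi>) (\<lambda>_. 0)}"

definition is_orth_proj :: "nat \<Rightarrow> (site \<Rightarrow> nat) \<Rightarrow> op \<Rightarrow> vec set \<Rightarrow> bool" where
  "is_orth_proj L d M V \<longleftrightarrow>
     (\<forall>\<sigma> \<tau>. (\<sigma> \<notin> cfgs L d \<or> \<tau> \<notin> cfgs L d) \<longrightarrow> M \<sigma> \<tau> = 0) \<and>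
     op_eq L d M (adjoint M) \<and> op_eq L d (mmult L d M M) M \<and>
     (\<forall>\<psi>. \<psi> \<in> V \<longleftrightarrow> vec_eq L d (apply_op L d M \<psi>) \<psi>)"

text \<open>M acts on A: M = M_A \<otimes> Id_{complement of A}.\<close>
definition acts_on :: "nat \<Rightarrow> (site \<Rightarrow> nat) \<Rightarrow> site set \<Rightarrow> op \<Rightarrow> bool" where
  "acts_on L d A M \<longleftrightarrow>
    (\<forall>\<sigma>\<in>cfgs L d. \<forall>\<tau>\<in>cfgs L d.
       ((\<exists>u\<in>sites L - A. \<sigma> u \<noteq> \<tau> u) \<longrightarrow> M \<sigma> \<tau> = 0) \<and>
       (\<forall>\<sigma>'\<in>cfgs L d. \<forall>\<tau>'\<in>cfgs L d.
          (\<forall>u\<in>A. \<sigma>' u = \<sigma> u \<and> \<tau>' u = \<tau> u) \<and>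
          (\<forall>u\<in>sites L - A. \<sigma> u = \<tau> u \<and> \<sigma>' u = \<tau>' u) \<longrightarrow> M \<sigma>' \<tau>' = M \<sigma> \<tau>))"

definition sq :: "nat \<Rightarrow> int \<Rightarrow> int \<Rightarrow> nat \<Rightarrow> site set" where
  "sq L x y r = {((x + i) mod int L, (y + j) mod int L) | i j.
                   0 \<le> i \<and> i < int r \<and> 0 \<le> j \<and> j < int r}"

definition squares :: "nat \<Rightarrow> nat \<Rightarrow> site set set" where
  "squares L r = {sq L x y r | x y. True}"

definition merge :: "site set \<Rightarrow> cfg \<Rightarrow> cfg \<Rightarrow> cfg" where
  "merge A \<alpha> \<gamma> = (\<lambda>u. if u \<in> A then \<alpha> u else \<gamma> u)"

definition ptrace :: "nat \<Rightarrow> (site \<Rightarrow> nat) \<Rightarrow> site set \<Rightarrow> op \<Rightarrow> op" where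
  "ptrace L d A X = (\<lambda>\<alpha> \<beta>. \<Sum>\<gamma>\<in>cfgs_on d (sites L - A). X (merge A \<alpha> \<gamma>) (merge A \<beta> \<gamma>))"

definition rkernel :: "(site \<Rightarrow> nat) \<Rightarrow> site set \<Rightarrow> op \<Rightarrow> vec set" where
  "rkernel d A K = {v. \<forall>\<alpha>\<in>cfgs_on d A. (\<Sum>\<beta>\<in>cfgs_on d A. K \<alpha> \<beta> * v \<beta>) = 0}"

definition ground :: "nat \<Rightarrow> (site \<Rightarrow> nat) \<Rightarrow> (site set \<Rightarrow> op) \<Rightarrow> vec set" where
  "ground L d G = {\<psi>. \<forall>A\<in>squares L 2. \<psi> \<in> kernel L d (G A)}"

definition Pblock :: "nat \<Rightarrow> (site \<Rightarrow> nat) \<Rightarrow> (site set \<Rightarrow> op) \<Rightarrow> site set \<Rightarrow> op" where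
  "Pblock L d PA B = Finite_Set.fold (\<lambda>A M. mmult L d (PA A) M) (idop L d)
                        {A \<in> squares L 2. A \<subseteq> B}"

definition H0 :: "nat \<Rightarrow> (site set \<Rightarrow> op) \<Rightarrow> op" where
  "H0 L G = (\<lambda>\<sigma> \<tau>. \<Sum>A\<in>squares L 2. G A \<sigma> \<tau>)"

definition hamiltonian_ok ::
  "nat \<Rightarrow> (site \<Rightarrow> nat) \<Rightarrow> (site set \<Rightarrow> op) \<Rightarrow> (site set \<Rightarrow> op) \<Rightarrow> op \<Rightarrow> bool" where
  "hamiltonian_ok L d G PA P \<longleftrightarrow>
     (\<forall>A\<in>squares L 2. acts_on L d A (G A) \<and> psd L d (G A) \<and>
         op_le L d (G A) (mmult L d (G A) (G A)) \<and>
         is_orth_proj L d (PA A) (kernel L d (G A))) \<and>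
     (\<forall>A\<in>squares L 2. \<forall>A'\<in>squares L 2. commute L d (G A) (G A')) \<and>
     (\<exists>\<psi>\<in>ground L d G. \<exists>\<sigma>\<in>cfgs L d. \<psi> \<sigma> \<noteq> 0) \<and>
     is_orth_proj L d P (ground L d G)"

definition TQO1 :: "nat \<Rightarrow> (site \<Rightarrow> nat) \<Rightarrow> nat \<Rightarrow> op \<Rightarrow> bool" where
  "TQO1 L d Lstar P \<longleftrightarrow>
     (\<forall>r A OA. 1 \<le> r \<and> r \<le> Lstar \<and> A \<in> squares L r \<and> acts_on L d A OA \<longrightarrow>
        (\<exists>z. op_eq L d (mmult L d P (mmult L d OA P)) (\<lambda>\<sigma> \<tau>. z * P \<sigma> \<tau>)))"

definition TQO2 :: "nat \<Rightarrow> (site \<Rightarrow> nat) \<Rightarrow> nat \<Rightarrow> (site set \<Rightarrow> op) \<Rightarrow> op \<Rightarrow> bool" where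
  "TQO2 L d Lstar PA P \<longleftrightarrow>
     (\<forall>r x y. 1 \<le> r \<and> r \<le> Lstar \<longrightarrow>
        rkernel d (sq L x y r) (ptrace L d (sq L x y r) P) =
        rkernel d (sq L x y r)
          (ptrace L d (sq L x y r) (Pblock L d PA (sq L (x - 1) (y - 1) (r + 2)))))"

end

theory Submission
  imports Defs "HOL-Library.Function_Algebras" "HOL-Library.FuncSet" "HOL-Analysis.L2_Norm"
begin

lemma cfgs_on_out: "\<sigma> \<in> cfgs_on d S \<Longrightarrow> u \<notin> S \<Longrightarrow> \<sigma> u = 0"
  unfolding cfgs_on_def by blast

lemma cfgs_on_in: "\<sigma> \<in> cfgs_on d S \<Longrightarrow> u \<in> S \<Longrightarrow> \<sigma> u < d u"
  unfolding cfgs_on_def by blast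

lemma cfgs_onI: "(\<And>u. u \<in> S \<Longrightarrow> \<sigma> u < d u) \<Longrightarrow> (\<And>u. u \<notin> S \<Longrightarrow> \<sigma> u = 0) \<Longrightarrow> \<sigma> \<in> cfgs_on d S"
  unfolding cfgs_on_def by blast

lemma finite_cfgs_on:
  assumes "finite S"
  shows "finite (cfgs_on d S)"
proof -
  let ?r = "\<lambda>(\<sigma>::cfg) u. if u \<in> S then \<sigma> u else undefined"
  have inj: "inj_on ?r (cfgs_on d S)"
  proof
    fix \<sigma> \<tau> assume s: "\<sigma> \<in> cfgs_on d S" and t: "\<tau> \<in> cfgs_on d S" and e: "?r \<sigma> = ?r \<tau>"
    show "\<sigma> = \<tau>"
    proof
      fix u
      have "?r \<sigma> u = ?r \<tau> u" using e by metis
      then show "\<sigma> u = \<tau> u"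
        using s t cfgs_on_out[of _ d S u] by (cases "u \<in> S") (simp, metis)
    qed
  qed
  have "?r ` cfgs_on d S \<subseteq> PiE S (\<lambda>u. {..<d u})"
    by (auto simp: PiE_iff dest: cfgs_on_in)
  moreover have "finite (PiE S (\<lambda>u. {..<d u}))"
    using assms by (intro finite_PiE) auto
  ultimately have "finite (?r ` cfgs_on d S)" by (rule finite_subset)
  then show ?thesis using inj finite_imageD by blast
qed

lemma finite_sites: "finite (sites L)"
  by (simp add: sites_def)

lemma finite_cfgs: "finite (cfgs L d)"
  by (simp add: cfgs_def finite_cfgs_on finite_sites)


definition ev :: "cfg \<Rightarrow> vec" where "ev \<sigma>0 = (\<lambda>\<sigma>. if \<sigma> = \<sigma>0 then 1 else 0)"

context
  fixes L :: nat and d :: "site \<Rightarrow> nat"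
begin

lemma apply_op_add: "apply_op L d M (\<phi> + \<psi>) = apply_op L d M \<phi> + apply_op L d M \<psi>"
  by (auto simp: apply_op_def distrib_left sum.distrib)

lemma apply_op_diff: "apply_op L d M (\<phi> - \<psi>) = apply_op L d M \<phi> - apply_op L d M \<psi>"
  by (auto simp: apply_op_def right_diff_distrib sum_subtractf)

lemma apply_op_scale: "apply_op L d M (\<lambda>\<tau>. c * \<psi> \<tau>) = (\<lambda>\<sigma>. c * apply_op L d M \<psi> \<sigma>)"
  by (auto simp: apply_op_def sum_distrib_left mult_ac)

lemma apply_op_sum: "apply_op L d M (\<lambda>\<tau>. \<Sum>i\<in>I. f i \<tau>) = (\<lambda>\<sigma>. \<Sum>i\<in>I. apply_op L d M (f i) \<sigma>)"
  by (auto simp: apply_op_def sum_distrib_left intro: sum.swap)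

lemma apply_op_zero: "apply_op L d M (\<lambda>_. 0) = (\<lambda>_. 0)"
  by (auto simp: apply_op_def)

lemma apply_op_cong: "vec_eq L d \<psi> \<psi>' \<Longrightarrow> apply_op L d M \<psi> = apply_op L d M \<psi>'"
  by (auto simp: apply_op_def vec_eq_def intro!: sum.cong)

lemma apply_op_mmult:
  "\<sigma> \<in> cfgs L d \<Longrightarrow> apply_op L d (mmult L d M N) \<psi> \<sigma> = apply_op L d M (apply_op L d N \<psi>) \<sigma>"
  by (auto simp: apply_op_def mmult_def sum_distrib_left sum_distrib_right mult_ac intro: sum.swap)

lemma apply_op_mmult_vec:
  "vec_eq L d (apply_op L d (mmult L d M N) \<psi>) (apply_op L d M (apply_op L d N \<psi>))"
  by (simp add: vec_eq_def apply_op_mmult)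

lemma apply_op_op_eq: "op_eq L d M N \<Longrightarrow> vec_eq L d (apply_op L d M \<psi>) (apply_op L d N \<psi>)"
  by (auto simp: op_eq_def vec_eq_def apply_op_def intro!: sum.cong)

lemma apply_op_ev: "\<sigma>0 \<in> cfgs L d \<Longrightarrow> apply_op L d M (ev \<sigma>0) \<sigma> = M \<sigma> \<sigma>0"
  using finite_cfgs[of L d] by (simp add: apply_op_def ev_def if_distrib cong: if_cong)

lemma op_eqI_vec:
  assumes "\<And>\<psi>. vec_eq L d (apply_op L d M \<psi>) (apply_op L d N \<psi>)"
  shows "op_eq L d M N"
  unfolding op_eq_def
proof (intro ballI)
  fix \<sigma> \<tau> assume s: "\<sigma> \<in> cfgs L d" and t: "\<tau> \<in> cfgs L d"
  have "apply_op L d M (ev \<tau>) \<sigma> = apply_op L d N (ev \<tau>) \<sigma>"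
    using assms[of "ev \<tau>"] s by (simp add: vec_eq_def)
  then show "M \<sigma> \<tau> = N \<sigma> \<tau>" using t by (simp add: apply_op_ev)
qed

lemma vec_eq_refl[simp]: "vec_eq L d \<psi> \<psi>" by (simp add: vec_eq_def)
lemma vec_eq_sym: "vec_eq L d \<phi> \<psi> \<Longrightarrow> vec_eq L d \<psi> \<phi>" by (simp add: vec_eq_def)
lemma vec_eq_trans: "vec_eq L d \<phi> \<psi> \<Longrightarrow> vec_eq L d \<psi> \<chi> \<Longrightarrow> vec_eq L d \<phi> \<chi>" by (simp add: vec_eq_def)

lemma inner_cong: "vec_eq L d \<phi> \<phi>' \<Longrightarrow> vec_eq L d \<psi> \<psi>' \<Longrightarrow> inner L d \<phi> \<psi> = inner L d \<phi>' \<psi>'"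
  by (auto simp: inner_def vec_eq_def intro!: sum.cong)

lemma inner_cnj: "inner L d \<psi> \<phi> = cnj (inner L d \<phi> \<psi>)"
  by (simp add: inner_def mult.commute)

lemma inner_add_right: "inner L d \<phi> (\<psi> + \<chi>) = inner L d \<phi> \<psi> + inner L d \<phi> \<chi>"
  by (simp add: inner_def distrib_left sum.distrib)

lemma inner_diff_right: "inner L d \<phi> (\<psi> - \<chi>) = inner L d \<phi> \<psi> - inner L d \<phi> \<chi>"
  by (simp add: inner_def right_diff_distrib sum_subtractf)

lemma inner_add_left: "inner L d (\<psi> + \<chi>) \<phi> = inner L d \<psi> \<phi> + inner L d \<chi> \<phi>"
  by (simp add: inner_def distrib_right sum.distrib)

lemma inner_diff_left: "inner L d (\<psi> - \<chi>) \<phi> = inner L d \<psi> \<phi> - inner L d \<chi> \<phi>"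
  by (simp add: inner_def left_diff_distrib sum_subtractf)

lemma inner_sum_right: "inner L d \<phi> (\<lambda>\<sigma>. \<Sum>i\<in>I. f i \<sigma>) = (\<Sum>i\<in>I. inner L d \<phi> (f i))"
  by (simp add: inner_def sum_distrib_left) (rule sum.swap)

lemma inner_sum_left: "inner L d (\<lambda>\<sigma>. \<Sum>i\<in>I. f i \<sigma>) \<phi> = (\<Sum>i\<in>I. inner L d (f i) \<phi>)"
  by (simp add: inner_def sum_distrib_right) (rule sum.swap)

lemma inner_scale_right: "inner L d \<phi> (\<lambda>\<sigma>. c * \<psi> \<sigma>) = c * inner L d \<phi> \<psi>"
  by (simp add: inner_def sum_distrib_left mult_ac)

lemma inner_zero_right[simp]: "inner L d \<phi> (\<lambda>_. 0) = 0"
  by (simp add: inner_def)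

lemma inner_self: "inner L d \<psi> \<psi> = complex_of_real ((vnorm L d \<psi>)\<^sup>2)"
proof -
  have "inner L d \<psi> \<psi> = (\<Sum>\<sigma>\<in>cfgs L d. complex_of_real ((cmod (\<psi> \<sigma>))\<^sup>2))"
    unfolding inner_def by (intro sum.cong refl) (simp add: complex_norm_square[symmetric] mult.commute del: of_real_power)
  also have "\<dots> = complex_of_real (\<Sum>\<sigma>\<in>cfgs L d. (cmod (\<psi> \<sigma>))\<^sup>2)" by simp
  also have "(\<Sum>\<sigma>\<in>cfgs L d. (cmod (\<psi> \<sigma>))\<^sup>2) = (vnorm L d \<psi>)\<^sup>2"
    unfolding vnorm_def by (simp add: sum_nonneg)
  finally show ?thesis .
qed

lemma vnorm_nonneg: "0 \<le> vnorm L d \<psi>"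
  by (simp add: vnorm_def sum_nonneg)

lemma vnorm_L2: "vnorm L d \<psi> = L2_set (\<lambda>\<sigma>. cmod (\<psi> \<sigma>)) (cfgs L d)"
  by (simp add: vnorm_def L2_set_def)

lemma vnorm_sq: "(vnorm L d \<psi>)\<^sup>2 = Re (inner L d \<psi> \<psi>)"
  by (simp add: inner_self)

lemma vnorm_cong: "vec_eq L d \<phi> \<psi> \<Longrightarrow> vnorm L d \<phi> = vnorm L d \<psi>"
  by (auto simp: vnorm_def vec_eq_def intro!: sum.cong)

lemma inner_CS: "cmod (inner L d \<phi> \<psi>) \<le> vnorm L d \<phi> * vnorm L d \<psi>"
proof -
  have "cmod (inner L d \<phi> \<psi>) \<le> (\<Sum>\<sigma>\<in>cfgs L d. cmod (cnj (\<phi> \<sigma>) * \<psi> \<sigma>))"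
    unfolding inner_def by (rule norm_sum)
  also have "\<dots> = (\<Sum>\<sigma>\<in>cfgs L d. \<bar>cmod (\<phi> \<sigma>)\<bar> * \<bar>cmod (\<psi> \<sigma>)\<bar>)"
    by (simp add: norm_mult)
  also have "\<dots> \<le> vnorm L d \<phi> * vnorm L d \<psi>"
    unfolding vnorm_L2 by (rule L2_set_mult_ineq)
  finally show ?thesis .
qed

lemma vnorm_zero_iff: "vnorm L d \<psi> = 0 \<longleftrightarrow> vec_eq L d \<psi> (\<lambda>_. 0)"
  using finite_cfgs[of L d] by (simp add: vnorm_L2 L2_set_eq_0_iff vec_eq_def)

lemma inner_adjoint: "inner L d \<phi> (apply_op L d M \<psi>) = inner L d (apply_op L d (adjoint M) \<phi>) \<psi>"
  by (simp add: inner_def apply_op_def adjoint_def sum_distrib_left sum_distrib_right)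
    (subst sum.swap, simp add: mult_ac)

lemma inner_herm:
  assumes "op_eq L d M (adjoint M)"
  shows "inner L d \<phi> (apply_op L d M \<psi>) = inner L d (apply_op L d M \<phi>) \<psi>"
proof -
  have "inner L d \<phi> (apply_op L d M \<psi>) = inner L d (apply_op L d (adjoint M) \<phi>) \<psi>"
    by (rule inner_adjoint)
  also have "\<dots> = inner L d (apply_op L d M \<phi>) \<psi>"
    using apply_op_op_eq[OF assms, of \<phi>] by (intro inner_cong) (auto simp: vec_eq_def)
  finally show ?thesis .
qed

lemma vec_eq_inner:
  assumes "\<And>\<phi>. inner L d \<phi> \<psi> = inner L d \<phi> \<psi>'"
  shows "vec_eq L d \<psi> \<psi>'"
  unfolding vec_eq_def
proof
  fix \<sigma> assume s: "\<sigma> \<in> cfgs L d"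
  have e: "inner L d (ev \<sigma>) f = f \<sigma>" for f
  proof -
    have "inner L d (ev \<sigma>) f = (\<Sum>\<sigma>'\<in>cfgs L d. if \<sigma> = \<sigma>' then f \<sigma>' else 0)"
      unfolding inner_def by (intro sum.cong) (auto simp: ev_def)
    then show ?thesis using s finite_cfgs[of L d] by simp
  qed
  have "inner L d (ev \<sigma>) \<psi> = \<psi> \<sigma>" "inner L d (ev \<sigma>) \<psi>' = \<psi>' \<sigma>" by (rule e)+
  then show "\<psi> \<sigma> = \<psi>' \<sigma>" using assms by metis
qed

end


context
  fixes L :: nat and d :: "site \<Rightarrow> nat"
begin

definition herm :: "op \<Rightarrow> bool" where
  "herm M \<longleftrightarrow> (\<forall>\<phi> \<psi>. inner L d \<phi> (apply_op L d M \<psi>) = inner L d (apply_op L d M \<phi>) \<psi>)"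

definition vcomm :: "op \<Rightarrow> op \<Rightarrow> bool" where
  "vcomm X Y \<longleftrightarrow> (\<forall>\<psi>. vec_eq L d (apply_op L d X (apply_op L d Y \<psi>)) (apply_op L d Y (apply_op L d X \<psi>)))"

definition videm :: "op \<Rightarrow> bool" where
  "videm M \<longleftrightarrow> (\<forall>\<psi>. vec_eq L d (apply_op L d M (apply_op L d M \<psi>)) (apply_op L d M \<psi>))"

lemma herm_op_eq: "op_eq L d M (adjoint M) \<Longrightarrow> herm M"
  unfolding herm_def using inner_herm by blast

lemma vcomm_commute: "commute L d X Y \<Longrightarrow> vcomm X Y"
  unfolding vcomm_def commute_def
proof
  fix \<psi> assume c: "op_eq L d (mmult L d X Y) (mmult L d Y X)"
  show "vec_eq L d (apply_op L d X (apply_op L d Y \<psi>)) (apply_op L d Y (apply_op L d X \<psi>))"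
    using apply_op_mmult_vec[of L d X Y \<psi>] apply_op_mmult_vec[of L d Y X \<psi>] apply_op_op_eq[OF c, of \<psi>]
    by (simp add: vec_eq_def)
qed

lemma vcomm_sym: "vcomm X Y \<Longrightarrow> vcomm Y X"
  unfolding vcomm_def by (simp add: vec_eq_def)

lemma videm_op_eq: "op_eq L d (mmult L d M M) M \<Longrightarrow> videm M"
  unfolding videm_def
proof
  fix \<psi> assume c: "op_eq L d (mmult L d M M) M"
  show "vec_eq L d (apply_op L d M (apply_op L d M \<psi>)) (apply_op L d M \<psi>)"
    using apply_op_mmult_vec[of L d M M \<psi>] apply_op_op_eq[OF c, of \<psi>]
    by (simp add: vec_eq_def)
qed

lemma adjoint_adjoint[simp]: "adjoint (adjoint M) = M"
  by (simp add: adjoint_def)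

lemma inner_adjoint2: "inner L d \<phi> (apply_op L d (adjoint M) \<psi>) = inner L d (apply_op L d M \<phi>) \<psi>"
  using inner_adjoint[of L d \<phi> "adjoint M" \<psi>] by simp

lemma vec_eq_inner_left:
  assumes "\<And>\<phi>. inner L d \<psi> \<phi> = inner L d \<psi>' \<phi>"
  shows "vec_eq L d \<psi> \<psi>'"
proof (rule vec_eq_inner)
  fix \<phi> show "inner L d \<phi> \<psi> = inner L d \<phi> \<psi>'"
    using assms[of \<phi>] by (metis inner_cnj)
qed

text \<open>Positive semidefinite operators are hermitian (polarization).\<close>

lemma inner_scale_left: "inner L d (\<lambda>\<sigma>. c * \<psi> \<sigma>) \<phi> = cnj c * inner L d \<psi> \<phi>"
  by (simp add: inner_def sum_distrib_left mult_ac)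

lemma psd_herm:
  assumes "psd L d M"
  shows "herm M"
  unfolding herm_def
proof (intro allI)
  fix \<phi> \<psi>
  let ?B = "\<lambda>x y. inner L d x (apply_op L d M y)"
  have real: "?B x x \<in> \<real>" for x using assms by (simp add: psd_def)
  have expand: "?B (\<phi> + (\<lambda>\<sigma>. c * \<psi> \<sigma>)) (\<phi> + (\<lambda>\<sigma>. c * \<psi> \<sigma>))
      = ?B \<phi> \<phi> + c * ?B \<phi> \<psi> + cnj c * ?B \<psi> \<phi> + cnj c * c * ?B \<psi> \<psi>" for c
    by (simp add: apply_op_add apply_op_scale inner_add_left inner_add_right inner_scale_left
        inner_scale_right algebra_simps)
  have r1: "?B \<phi> \<psi> + ?B \<psi> \<phi> \<in> \<real>"
  proof -
    have "?B \<phi> \<phi> + 1 * ?B \<phi> \<psi> + cnj 1 * ?B \<psi> \<phi> + cnj 1 * 1 * ?B \<psi> \<psi> \<in> \<real>"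
      using real[of "\<phi> + (\<lambda>\<sigma>. 1 * \<psi> \<sigma>)"] expand[of 1] by simp
    then have "(?B \<phi> \<phi> + ?B \<psi> \<psi>) + (?B \<phi> \<psi> + ?B \<psi> \<phi>) \<in> \<real>"
      by (simp add: algebra_simps)
    moreover have "?B \<phi> \<phi> + ?B \<psi> \<psi> \<in> \<real>" using real by (simp add: Reals_add)
    ultimately show ?thesis by (metis Reals_diff add_diff_cancel_left')
  qed
  have r2: "\<i> * ?B \<phi> \<psi> - \<i> * ?B \<psi> \<phi> \<in> \<real>"
  proof -
    have "?B \<phi> \<phi> + \<i> * ?B \<phi> \<psi> + cnj \<i> * ?B \<psi> \<phi> + cnj \<i> * \<i> * ?B \<psi> \<psi> \<in> \<real>"
      using real[of "\<phi> + (\<lambda>\<sigma>. \<i> * \<psi> \<sigma>)"] expand[of \<i>] by simp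
    then have "(?B \<phi> \<phi> + ?B \<psi> \<psi>) + (\<i> * ?B \<phi> \<psi> - \<i> * ?B \<psi> \<phi>) \<in> \<real>"
      by (simp add: algebra_simps)
    moreover have "?B \<phi> \<phi> + ?B \<psi> \<psi> \<in> \<real>" using real by (simp add: Reals_add)
    ultimately show ?thesis by (metis Reals_diff add_diff_cancel_left')
  qed
  have "?B \<psi> \<phi> = cnj (?B \<phi> \<psi>)"
    using r1 r2 by (auto simp: complex_eq_iff Reals_def complex_is_Real_iff)
  then show "?B \<phi> \<psi> = inner L d (apply_op L d M \<phi>) \<psi>"
    by (metis complex_cnj_cnj inner_cnj)
qed

lemma comm_kernel_proj:
  assumes hG: "herm G" and hP: "herm P" and iP: "videm P"
    and kP: "\<And>\<psi>. vec_eq L d (apply_op L d G \<psi>) (\<lambda>_. 0) \<longleftrightarrow> vec_eq L d (apply_op L d P \<psi>) \<psi>"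
    and cX: "vcomm X G"
  shows "vcomm X P"
proof -
  let ?a = "apply_op L d"
  have GP: "vec_eq L d (?a G (?a P \<psi>)) (\<lambda>_. 0)" for \<psi>
    using kP[of "?a P \<psi>"] iP by (simp add: videm_def)
  have key: "vec_eq L d (?a P (?a Y (?a P \<psi>))) (?a Y (?a P \<psi>))" if cY: "vcomm Y G" for Y \<psi>
  proof -
    have "vec_eq L d (?a G (?a Y (?a P \<psi>))) (?a Y (?a G (?a P \<psi>)))"
      using cY by (simp add: vcomm_def vec_eq_def)
    also have "?a Y (?a G (?a P \<psi>)) = ?a Y (\<lambda>_. 0)"
      by (rule apply_op_cong[OF GP])
    finally have "vec_eq L d (?a G (?a Y (?a P \<psi>))) (\<lambda>_. 0)"
      by (simp add: apply_op_zero)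
    then show ?thesis using kP by blast
  qed
  have cXa: "vcomm (adjoint X) G"
    unfolding vcomm_def
  proof
    fix \<psi>
    show "vec_eq L d (?a (adjoint X) (?a G \<psi>)) (?a G (?a (adjoint X) \<psi>))"
    proof (rule vec_eq_inner)
      fix \<phi>
      have "inner L d \<phi> (?a (adjoint X) (?a G \<psi>)) = inner L d (?a G (?a X \<phi>)) \<psi>"
        using hG by (simp add: inner_adjoint2 herm_def)
      also have "\<dots> = inner L d (?a X (?a G \<phi>)) \<psi>"
        using cX by (intro inner_cong) (auto simp: vcomm_def vec_eq_def)
      also have "\<dots> = inner L d (?a G \<phi>) (?a (adjoint X) \<psi>)"
        by (simp add: inner_adjoint2)
      also have "\<dots> = inner L d \<phi> (?a G (?a (adjoint X) \<psi>))"
        using hG by (simp add: herm_def)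
      finally show "inner L d \<phi> (?a (adjoint X) (?a G \<psi>)) = inner L d \<phi> (?a G (?a (adjoint X) \<psi>))" .
    qed
  qed
  show ?thesis
    unfolding vcomm_def
  proof
    fix \<psi>
    have "vec_eq L d (?a P (?a X \<psi>)) (?a X (?a P \<psi>))"
    proof (rule vec_eq_inner)
      fix \<phi>
      have "inner L d \<phi> (?a P (?a X \<psi>)) = inner L d (?a P \<phi>) (?a X \<psi>)"
        using hP by (simp add: herm_def)
      also have "\<dots> = inner L d (?a (adjoint X) (?a P \<phi>)) \<psi>"
        by (rule inner_adjoint)
      also have "\<dots> = inner L d (?a P (?a (adjoint X) (?a P \<phi>))) \<psi>"
        using key[OF cXa, of \<phi>] by (intro inner_cong) (auto simp: vec_eq_def)
      also have "\<dots> = inner L d (?a (adjoint X) (?a P \<phi>)) (?a P \<psi>)"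
        using hP by (simp add: herm_def)
      also have "\<dots> = inner L d (?a P \<phi>) (?a X (?a P \<psi>))"
        by (rule inner_adjoint[symmetric])
      also have "\<dots> = inner L d \<phi> (?a P (?a X (?a P \<psi>)))"
        using hP by (simp add: herm_def)
      also have "\<dots> = inner L d \<phi> (?a X (?a P \<psi>))"
        using key[OF cX, of \<psi>] by (intro inner_cong) (auto simp: vec_eq_def)
      finally show "inner L d \<phi> (?a P (?a X \<psi>)) = inner L d \<phi> (?a X (?a P \<psi>))" .
    qed
    then show "vec_eq L d (?a X (?a P \<psi>)) (?a P (?a X \<psi>))" by (simp add: vec_eq_def)
  qed
qed

end


definition fsc :: "complex \<Rightarrow> vec \<Rightarrow> vec" where "fsc c f = (\<lambda>\<sigma>. c * f \<sigma>)"

global_interpretation fvs: vector_space fsc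
  by unfold_locales (auto simp: fsc_def fun_eq_iff algebra_simps)

lemma sum_fun_apply: "(sum h I) x = (\<Sum>i\<in>I. h i x)"
  by (induct I rule: infinite_finite_induct) auto

context
  fixes L :: nat and d :: "site \<Rightarrow> nat"
begin

definition rst :: "vec \<Rightarrow> vec" where
  "rst f = (\<lambda>\<sigma>. if \<sigma> \<in> cfgs L d then f \<sigma> else 0)"

definition Esp :: "vec set" where
  "Esp = {f. \<forall>\<sigma>. \<sigma> \<notin> cfgs L d \<longrightarrow> f \<sigma> = 0}"

lemma rst_vec_eq: "vec_eq L d (rst f) f"
  by (simp add: rst_def vec_eq_def)

lemma rst_Esp: "rst f \<in> Esp"
  by (simp add: rst_def Esp_def)

lemma Esp_vec_eq: "f \<in> Esp \<Longrightarrow> g \<in> Esp \<Longrightarrow> vec_eq L d f g \<Longrightarrow> f = g"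
  by (auto simp: Esp_def vec_eq_def fun_eq_iff)

lemma Esp_span: "Esp \<subseteq> fvs.span (ev ` cfgs L d)"
proof
  fix f assume f: "f \<in> Esp"
  have "f = (\<Sum>\<sigma>\<in>cfgs L d. fsc (f \<sigma>) (ev \<sigma>))"
  proof
    fix x
    have "(\<Sum>\<sigma>\<in>cfgs L d. fsc (f \<sigma>) (ev \<sigma>)) x = (\<Sum>\<sigma>\<in>cfgs L d. if \<sigma> = x then f \<sigma> else 0)"
      unfolding sum_fun_apply fsc_def ev_def by (rule sum.cong) auto
    also have "\<dots> = f x" using f finite_cfgs[of L d] by (auto simp: Esp_def)
    finally show "f x = (\<Sum>\<sigma>\<in>cfgs L d. fsc (f \<sigma>) (ev \<sigma>)) x" by simp
  qed
  also have "\<dots> \<in> fvs.span (ev ` cfgs L d)"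
    by (intro fvs.span_sum fvs.span_scale fvs.span_base) auto
  finally show "f \<in> fvs.span (ev ` cfgs L d)" .
qed

lemma range_lemma:
  assumes hG: "herm L d G" and hP: "herm L d P" and iP: "videm L d P"
    and kP: "\<And>\<psi>. vec_eq L d (apply_op L d G \<psi>) (\<lambda>_. 0) \<longleftrightarrow> vec_eq L d (apply_op L d P \<psi>) \<psi>"
    and u0: "vec_eq L d (apply_op L d P u) (\<lambda>_. 0)"
  shows "\<exists>w. vec_eq L d u (apply_op L d G w)"
proof -
  let ?a = "apply_op L d"
  define g where "g f = rst (?a G f)" for f
  define V where "V = {f \<in> Esp. vec_eq L d (?a P f) (\<lambda>_. 0)}"
  have m: "module fsc" using fvs.vector_space_axioms module_iff_vector_space by blast
  have lin: "Vector_Spaces.linear fsc fsc g"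
    unfolding Vector_Spaces.linear_def module_hom_def module_hom_axioms_def
    by (auto simp: m fvs.vector_space_axioms g_def rst_def fsc_def
        apply_op_add apply_op_scale[unfolded fsc_def] fun_eq_iff)
  interpret g: Vector_Spaces.linear fsc fsc g by (rule lin)
  have subV: "fvs.subspace V"
    by (rule fvs.subspaceI)
      (auto simp: V_def Esp_def fsc_def vec_eq_def apply_op_add apply_op_scale[unfolded fsc_def]
        zero_fun_def apply_op_def distrib_left sum.distrib,
       simp add: mult.left_commute sum_distrib_left[symmetric])
  have PG: "vec_eq L d (?a P (?a G f)) (\<lambda>_. 0)" for f
  proof (rule vec_eq_inner)
    fix \<phi>
    have "inner L d \<phi> (?a P (?a G f)) = inner L d (?a G (?a P \<phi>)) f"
      using hP hG by (simp add: herm_def)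
    also have "\<dots> = inner L d (\<lambda>_. 0) f"
    proof (rule inner_cong)
      show "vec_eq L d (?a G (?a P \<phi>)) (\<lambda>_. 0)"
        using kP[of "?a P \<phi>"] iP by (simp add: videm_def)
    qed simp
    also have "\<dots> = 0" by (simp add: inner_def)
    finally show "inner L d \<phi> (?a P (?a G f)) = inner L d \<phi> (\<lambda>_. 0)" by simp
  qed
  have gV: "g f \<in> V" for f
  proof -
    have "?a P (g f) = ?a P (?a G f)" unfolding g_def by (rule apply_op_cong[OF rst_vec_eq])
    then show ?thesis using PG[of f] by (simp add: V_def g_def rst_Esp)
  qed
  have injV: "inj_on g V"
  proof (rule inj_onI)
    fix x y assume x: "x \<in> V" and y: "y \<in> V" and e: "g x = g y"
    have z: "x - y \<in> V" using fvs.subspace_diff[OF subV x y] .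
    have "g (x - y) = 0" using e by (simp add: g.diff)
    then have "vec_eq L d (?a G (x - y)) (\<lambda>_. 0)"
      unfolding g_def rst_def vec_eq_def fun_eq_iff zero_fun_def by metis
    then have "vec_eq L d (?a P (x - y)) (x - y)" using kP by blast
    then have "vec_eq L d (x - y) (\<lambda>_. 0)" using z by (auto simp: V_def vec_eq_def)
    then have "x - y = 0" using z by (auto simp: V_def Esp_def vec_eq_def fun_eq_iff)
    then show "x = y" by simp
  qed
  obtain B where B: "B \<subseteq> V" "fvs.independent B" "V \<subseteq> fvs.span B" "card B = fvs.dim V"
    by (rule fvs.basis_exists)
  have VE: "V \<subseteq> fvs.span (ev ` cfgs L d)" using Esp_span by (auto simp: V_def)
  have finB: "finite B"
    using fvs.independent_span_bound[of "ev ` cfgs L d" B] B VE finite_cfgs[of L d] by auto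
  have spanB: "fvs.span B \<subseteq> V" using B(1) subV by (rule fvs.span_minimal)
  have indg: "fvs.independent (g ` B)"
    using g.independent_injective_image[OF B(2)] injV spanB inj_on_subset by blast
  have cardg: "card (g ` B) = card B"
    using injV B(1) by (simp add: card_image inj_on_subset)
  define u' where "u' = rst u"
  have u'V: "u' \<in> V"
    using u0 apply_op_cong[OF rst_vec_eq[of u]] by (auto simp: V_def u'_def rst_Esp)
  have "u' \<in> fvs.span (g ` B)"
  proof (rule ccontr)
    assume nu: "u' \<notin> fvs.span (g ` B)"
    have ind2: "fvs.independent (insert u' (g ` B))"
      using fvs.independent_insertI[OF nu indg] .
    have sub2: "insert u' (g ` B) \<subseteq> fvs.span B" using u'V gV B(3) by auto
    have "card (insert u' (g ` B)) \<le> card B"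
      using fvs.independent_span_bound[OF finB ind2 sub2] by simp
    moreover have "u' \<notin> g ` B" using nu fvs.span_base by blast
    then have "card (insert u' (g ` B)) = card B + 1"
      using finB cardg by simp
    ultimately show False by simp
  qed
  then have "u' \<in> g ` fvs.span B" by (simp add: g.span_image)
  then obtain w where "u' = g w" by blast
  then have "vec_eq L d u (?a G w)"
    unfolding u'_def g_def rst_def vec_eq_def fun_eq_iff by metis
  then show ?thesis by blast
qed

end


context
  fixes L :: nat and d :: "site \<Rightarrow> nat"
begin

lemma inner_expand2:
  "inner L d ((\<lambda>\<sigma>. \<alpha> * w \<sigma>) + (\<lambda>\<sigma>. \<gamma> * z \<sigma>)) (apply_op L d G ((\<lambda>\<sigma>. \<alpha> * w \<sigma>) + (\<lambda>\<sigma>. \<gamma> * z \<sigma>)))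
   = cnj \<alpha> * \<alpha> * inner L d w (apply_op L d G w) + cnj \<alpha> * \<gamma> * inner L d w (apply_op L d G z)
     + cnj \<gamma> * \<alpha> * inner L d z (apply_op L d G w) + cnj \<gamma> * \<gamma> * inner L d z (apply_op L d G z)"
  by (simp add: apply_op_add apply_op_scale inner_add_left inner_add_right inner_scale_left
      inner_scale_right algebra_simps)

lemma psd_CS:
  assumes hG: "herm L d G" and pos: "\<And>v. inner L d v (apply_op L d G v) \<in> \<real> \<and> 0 \<le> Re (inner L d v (apply_op L d G v))"
  shows "(cmod (inner L d w (apply_op L d G z)))\<^sup>2
          \<le> Re (inner L d w (apply_op L d G w)) * Re (inner L d z (apply_op L d G z))"
proof -
  define a where "a = Re (inner L d w (apply_op L d G w))"
  define c where "c = Re (inner L d z (apply_op L d G z))"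
  define \<beta> where "\<beta> = inner L d w (apply_op L d G z)"
  have ea: "inner L d w (apply_op L d G w) = of_real a"
    using pos[of w] by (simp add: a_def complex_is_Real_iff complex_eq_iff)
  have ec: "inner L d z (apply_op L d G z) = of_real c"
    using pos[of z] by (simp add: c_def complex_is_Real_iff complex_eq_iff)
  have eb: "inner L d z (apply_op L d G w) = cnj \<beta>"
    unfolding \<beta>_def using hG by (metis herm_def inner_cnj)
  have a0: "0 \<le> a" and c0: "0 \<le> c" using pos[of w] pos[of z] by (auto simp: a_def c_def)
  have F: "0 \<le> Re (cnj \<alpha> * \<alpha> * of_real a + cnj \<alpha> * \<gamma> * \<beta> + cnj \<gamma> * \<alpha> * cnj \<beta> + cnj \<gamma> * \<gamma> * of_real c)" for \<alpha> \<gamma>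
    using pos[of "(\<lambda>\<sigma>. \<alpha> * w \<sigma>) + (\<lambda>\<sigma>. \<gamma> * z \<sigma>)"]
    unfolding inner_expand2 ea ec eb \<beta>_def[symmetric] by simp
  have nb: "(cmod \<beta>)\<^sup>2 = Re \<beta> * Re \<beta> + Im \<beta> * Im \<beta>"
    by (simp add: cmod_def power2_eq_square)
  show ?thesis
  proof (cases "c = 0")
    case False
    then have cp: "c > 0" using c0 by simp
    have "0 \<le> Re (cnj (of_real c) * of_real c * of_real a + cnj (of_real c) * (- cnj \<beta>) * \<beta>
        + cnj (- cnj \<beta>) * of_real c * cnj \<beta> + cnj (- cnj \<beta>) * (- cnj \<beta>) * of_real c)"
      by (rule F)
    then have "0 \<le> c * c * a - c * (cmod \<beta>)\<^sup>2"
      by (simp add: nb algebra_simps)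
    then have "c * (cmod \<beta>)\<^sup>2 \<le> c * (c * a)" by (simp add: algebra_simps)
    then have "(cmod \<beta>)\<^sup>2 \<le> c * a" using cp by simp
    then show ?thesis by (simp add: \<beta>_def a_def c_def mult.commute)
  next
    case True
    show ?thesis
    proof (rule ccontr)
      assume "\<not> ?thesis"
      then have bp: "(cmod \<beta>)\<^sup>2 > 0" using True by (simp add: \<beta>_def c_def)
      define t where "t = (a + 1) / (2 * (cmod \<beta>)\<^sup>2)"
      have "0 \<le> Re (cnj 1 * 1 * of_real a + cnj 1 * (- of_real t * cnj \<beta>) * \<beta>
          + cnj (- of_real t * cnj \<beta>) * 1 * cnj \<beta> + cnj (- of_real t * cnj \<beta>) * (- of_real t * cnj \<beta>) * of_real c)"
        by (rule F)
      then have "0 \<le> a - 2 * t * (cmod \<beta>)\<^sup>2"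
        using True by (simp add: nb algebra_simps)
      moreover have "2 * t * (cmod \<beta>)\<^sup>2 = a + 1" using bp by (simp add: t_def)
      ultimately show False by simp
    qed
  qed
qed

lemma gap:
  assumes pG: "psd L d G" and sG: "op_le L d G (mmult L d G G)"
    and hP: "herm L d P" and iP: "videm L d P"
    and kP: "\<And>\<psi>. vec_eq L d (apply_op L d G \<psi>) (\<lambda>_. 0) \<longleftrightarrow> vec_eq L d (apply_op L d P \<psi>) \<psi>"
  shows "(vnorm L d (x - apply_op L d P x))\<^sup>2 \<le> Re (inner L d x (apply_op L d G x))"
proof -
  let ?a = "apply_op L d"
  have hG: "herm L d G" by (rule psd_herm[OF pG])
  have pos: "\<And>v. inner L d v (?a G v) \<in> \<real> \<and> 0 \<le> Re (inner L d v (?a G v))"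
    using pG by (simp add: psd_def)
  have sq: "Re (inner L d v (?a G v)) \<le> Re (inner L d (?a G v) (?a G v))" for v
  proof -
    have "0 \<le> Re (inner L d v (?a (\<lambda>\<sigma> \<tau>. mmult L d G G \<sigma> \<tau> - G \<sigma> \<tau>) v))"
      using sG by (simp add: op_le_def psd_def)
    also have "?a (\<lambda>\<sigma> \<tau>. mmult L d G G \<sigma> \<tau> - G \<sigma> \<tau>) v = ?a (mmult L d G G) v - ?a G v"
      by (simp add: apply_op_def left_diff_distrib sum_subtractf fun_eq_iff)
    also have "inner L d v (?a (mmult L d G G) v - ?a G v) = inner L d v (?a G (?a G v)) - inner L d v (?a G v)"
      using apply_op_mmult_vec[of L d G G v] by (simp add: inner_diff_right) (rule inner_cong, auto)
    also have "inner L d v (?a G (?a G v)) = inner L d (?a G v) (?a G v)"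
      using hG by (simp add: herm_def)
    finally show ?thesis by simp
  qed
  define u where "u = x - ?a P x"
  have GPx: "vec_eq L d (?a G (?a P x)) (\<lambda>_. 0)"
    using kP[of "?a P x"] iP by (simp add: videm_def)
  have Pu: "vec_eq L d (?a P u) (\<lambda>_. 0)"
    using iP by (simp add: u_def apply_op_diff videm_def vec_eq_def)
  have Gu: "vec_eq L d (?a G u) (?a G x)"
    using GPx by (simp add: u_def apply_op_diff vec_eq_def)
  have b3: "inner L d u (?a G u) = inner L d x (?a G x)"
  proof -
    have "inner L d u (?a G u) = inner L d x (?a G u) - inner L d (?a P x) (?a G u)"
      by (simp add: u_def inner_diff_left)
    also have "inner L d (?a P x) (?a G u) = inner L d (?a G (?a P x)) u"
      using hG by (simp add: herm_def)
    also have "\<dots> = 0" using inner_cong[OF GPx vec_eq_refl, of u] by (simp add: inner_def)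
    also have "inner L d x (?a G u) = inner L d x (?a G x)" by (rule inner_cong[OF vec_eq_refl Gu])
    finally show ?thesis by simp
  qed
  obtain w where w: "vec_eq L d u (?a G w)"
    using range_lemma[OF hG hP iP kP Pu] by blast
  define b1 where "b1 = Re (inner L d w (?a G w))"
  define b2 where "b2 = (vnorm L d u)\<^sup>2"
  define b3 where "b3 = Re (inner L d x (?a G x))"
  have b1b2: "b1 \<le> b2"
    using sq[of w] vnorm_sq[of L d u] inner_cong[OF w w] by (simp add: b1_def b2_def)
  have CS: "(cmod (inner L d w (?a G (?a G w))))\<^sup>2 \<le> b1 * b3"
  proof -
    have "(cmod (inner L d w (?a G (?a G w))))\<^sup>2 \<le> b1 * Re (inner L d (?a G w) (?a G (?a G w)))"
      unfolding b1_def by (rule psd_CS[OF hG pos])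
    also have "inner L d (?a G w) (?a G (?a G w)) = inner L d u (?a G u)"
      using w apply_op_cong[OF w, of G] by (intro inner_cong) (auto simp: vec_eq_def)
    finally show ?thesis using b3 by (simp add: b3_def)
  qed
  have e2: "inner L d w (?a G (?a G w)) = of_real b2"
  proof -
    have "inner L d w (?a G (?a G w)) = inner L d (?a G w) (?a G w)"
      using hG by (simp add: herm_def)
    also have "\<dots> = inner L d u u" using w by (intro inner_cong) (auto simp: vec_eq_def)
    finally show ?thesis by (simp add: inner_self b2_def)
  qed
  have b1p: "0 \<le> b1" using pos by (simp add: b1_def)
  have b2p: "0 \<le> b2" by (simp add: b2_def)
  have "cmod (inner L d w (?a G (?a G w))) = b2" unfolding e2 norm_of_real using b2p by simp
  then have b2sq: "b2 * b2 \<le> b1 * b3" using CS by (simp add: power2_eq_square)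
  have b3p: "0 \<le> b3" using pos by (simp add: b3_def)
  have "b2 \<le> b3"
  proof (cases "b2 = 0")
    case True then show ?thesis using b3p by simp
  next
    case False
    then have "b2 > 0" using b2p by simp
    then have "b1 > 0" using b2sq b1p b3p
      by (metis mult_eq_0_iff mult_pos_pos not_le order_antisym_conv zero_less_mult_iff mult_nonneg_nonneg linorder_neq_iff)
    have "b1 * b2 \<le> b2 * b2" using b1b2 \<open>b2 > 0\<close> by (simp add: mult_right_mono)
    also have "\<dots> \<le> b1 * b3" by (rule b2sq)
    finally show ?thesis using \<open>b1 > 0\<close> by simp
  qed
  then show ?thesis by (simp add: b2_def b3_def u_def)
qed

end


lemma merge_in_cfgs:
  assumes "A \<subseteq> sites L" "\<alpha> \<in> cfgs_on d A" "\<gamma> \<in> cfgs_on d (sites L - A)"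
  shows "merge A \<alpha> \<gamma> \<in> cfgs L d"
  unfolding cfgs_def
proof (rule cfgs_onI)
  fix u assume "u \<in> sites L"
  then show "merge A \<alpha> \<gamma> u < d u"
    using assms cfgs_on_in[of \<alpha> d A u] cfgs_on_in[of \<gamma> d "sites L - A" u] by (auto simp: merge_def)
next
  fix u assume "u \<notin> sites L"
  then show "merge A \<alpha> \<gamma> u = 0"
    using assms cfgs_on_out[of \<gamma> d "sites L - A" u] by (auto simp: merge_def)
qed

lemma merge_cfgs_mixed:
  assumes "A \<subseteq> sites L" "\<sigma> \<in> cfgs L d" "\<mu> \<in> cfgs L d"
  shows "merge A \<mu> \<sigma> \<in> cfgs L d"
  unfolding cfgs_def
proof (rule cfgs_onI)
  fix u assume "u \<in> sites L"
  then show "merge A \<mu> \<sigma> u < d u"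
    using assms cfgs_on_in[of \<sigma> d "sites L" u] cfgs_on_in[of \<mu> d "sites L" u]
    by (auto simp: merge_def cfgs_def)
next
  fix u assume "u \<notin> sites L"
  then show "merge A \<mu> \<sigma> u = 0"
    using assms cfgs_on_out[of \<sigma> d "sites L" u] by (auto simp: merge_def cfgs_def)
qed

definition r0 :: "site set \<Rightarrow> cfg \<Rightarrow> cfg" where
  "r0 S \<sigma> = (\<lambda>u. if u \<in> S then \<sigma> u else 0)"

lemma r0_in: "\<sigma> \<in> cfgs L d \<Longrightarrow> S \<subseteq> sites L \<Longrightarrow> r0 S \<sigma> \<in> cfgs_on d S"
  by (rule cfgs_onI) (auto simp: r0_def cfgs_def dest: cfgs_on_in)

lemma merge_r0: "\<sigma> \<in> cfgs L d \<Longrightarrow> merge A (r0 A \<sigma>) (r0 (sites L - A) \<sigma>) = \<sigma>"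
  by (auto simp: fun_eq_iff merge_def r0_def cfgs_def dest: cfgs_on_out)

lemma r0_merge1: "\<alpha> \<in> cfgs_on d A \<Longrightarrow> r0 A (merge A \<alpha> \<gamma>) = \<alpha>"
  by (auto simp: fun_eq_iff merge_def r0_def dest: cfgs_on_out)

lemma r0_merge2: "\<gamma> \<in> cfgs_on d (sites L - A) \<Longrightarrow> r0 (sites L - A) (merge A \<alpha> \<gamma>) = \<gamma>"
  by (auto simp: fun_eq_iff merge_def r0_def dest: cfgs_on_out)

lemma sum_cfgs_split:
  assumes A: "A \<subseteq> sites L"
  shows "(\<Sum>\<sigma>\<in>cfgs L d. f \<sigma>) = (\<Sum>\<alpha>\<in>cfgs_on d A. \<Sum>\<gamma>\<in>cfgs_on d (sites L - A). f (merge A \<alpha> \<gamma>))"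
proof -
  have bij: "bij_betw (\<lambda>(\<alpha>, \<gamma>). merge A \<alpha> \<gamma>) (cfgs_on d A \<times> cfgs_on d (sites L - A)) (cfgs L d)"
  proof (rule bij_betw_byWitness[where f' = "\<lambda>\<sigma>. (r0 A \<sigma>, r0 (sites L - A) \<sigma>)"])
    show "\<forall>x\<in>cfgs_on d A \<times> cfgs_on d (sites L - A). (\<lambda>\<sigma>. (r0 A \<sigma>, r0 (sites L - A) \<sigma>)) ((\<lambda>(\<alpha>, \<gamma>). merge A \<alpha> \<gamma>) x) = x"
      by (auto simp: r0_merge1 r0_merge2)
    show "\<forall>y\<in>cfgs L d. (\<lambda>(\<alpha>, \<gamma>). merge A \<alpha> \<gamma>) ((\<lambda>\<sigma>. (r0 A \<sigma>, r0 (sites L - A) \<sigma>)) y) = y"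
      by (auto simp: merge_r0)
    show "(\<lambda>(\<alpha>, \<gamma>). merge A \<alpha> \<gamma>) ` (cfgs_on d A \<times> cfgs_on d (sites L - A)) \<subseteq> cfgs L d"
      using merge_in_cfgs[OF A] by auto
    show "(\<lambda>\<sigma>. (r0 A \<sigma>, r0 (sites L - A) \<sigma>)) ` cfgs L d \<subseteq> cfgs_on d A \<times> cfgs_on d (sites L - A)"
      using r0_in A by auto
  qed
  have "(\<Sum>\<sigma>\<in>cfgs L d. f \<sigma>) = (\<Sum>x\<in>cfgs_on d A \<times> cfgs_on d (sites L - A). f ((\<lambda>(\<alpha>, \<gamma>). merge A \<alpha> \<gamma>) x))"
    using sum.reindex_bij_betw[OF bij, of f] by simp
  also have "\<dots> = (\<Sum>\<alpha>\<in>cfgs_on d A. \<Sum>\<gamma>\<in>cfgs_on d (sites L - A). f (merge A \<alpha> \<gamma>))"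
    by (simp add: sum.cartesian_product split_def)
  finally show ?thesis .
qed

lemma acts_on_adjoint:
  assumes X: "acts_on L d A X"
  shows "acts_on L d A (adjoint X)"
  unfolding acts_on_def
proof (intro ballI conjI impI)
  fix \<sigma> \<tau> assume s: "\<sigma> \<in> cfgs L d" and t: "\<tau> \<in> cfgs L d"
  { assume "\<exists>u\<in>sites L - A. \<sigma> u \<noteq> \<tau> u"
    then have "\<exists>u\<in>sites L - A. \<tau> u \<noteq> \<sigma> u" by metis
    then have "X \<tau> \<sigma> = 0" using X s t unfolding acts_on_def by blast
    then show "adjoint X \<sigma> \<tau> = 0" by (simp add: adjoint_def) }
  fix \<sigma>' \<tau>' assume s': "\<sigma>' \<in> cfgs L d" and t': "\<tau>' \<in> cfgs L d"
    and h: "(\<forall>u\<in>A. \<sigma>' u = \<sigma> u \<and> \<tau>' u = \<tau> u) \<and> (\<forall>u\<in>sites L - A. \<sigma> u = \<tau> u \<and> \<sigma>' u = \<tau>' u)"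
  have h2: "(\<forall>u\<in>A. \<tau>' u = \<tau> u \<and> \<sigma>' u = \<sigma> u) \<and> (\<forall>u\<in>sites L - A. \<tau> u = \<sigma> u \<and> \<tau>' u = \<sigma>' u)"
    using h by metis
  have "X \<tau>' \<sigma>' = X \<tau> \<sigma>" using X s t s' t' h2 unfolding acts_on_def by blast
  then show "adjoint X \<sigma>' \<tau>' = adjoint X \<sigma> \<tau>" by (simp add: adjoint_def)
qed

lemma acts_on_zero_outside:
  assumes "acts_on L d A X" "\<sigma> \<in> cfgs L d" "\<tau> \<in> cfgs L d" "u \<in> sites L" "u \<notin> A" "\<sigma> u \<noteq> \<tau> u"
  shows "X \<sigma> \<tau> = 0"
  using assms unfolding acts_on_def by blast

lemma acts_on_transl:
  assumes "acts_on L d A X" "\<sigma> \<in> cfgs L d" "\<tau> \<in> cfgs L d" "\<sigma>' \<in> cfgs L d" "\<tau>' \<in> cfgs L d"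
    "\<And>u. u \<in> A \<Longrightarrow> \<sigma>' u = \<sigma> u \<and> \<tau>' u = \<tau> u"
    "\<And>u. u \<in> sites L \<Longrightarrow> u \<notin> A \<Longrightarrow> \<sigma> u = \<tau> u \<and> \<sigma>' u = \<tau>' u"
  shows "X \<sigma>' \<tau>' = X \<sigma> \<tau>"
proof -
  have h: "(\<forall>u\<in>A. \<sigma>' u = \<sigma> u \<and> \<tau>' u = \<tau> u) \<and> (\<forall>u\<in>sites L - A. \<sigma> u = \<tau> u \<and> \<sigma>' u = \<tau>' u)"
    using assms(6,7) by blast
  show ?thesis using assms(1-5) h unfolding acts_on_def by blast
qed

lemma mmult_single:
  assumes "\<rho>1 \<in> cfgs L d" "\<And>\<rho>. \<rho> \<in> cfgs L d \<Longrightarrow> \<rho> \<noteq> \<rho>1 \<Longrightarrow> X \<sigma> \<rho> * Y \<rho> \<mu> = 0"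
  shows "(\<Sum>\<rho>\<in>cfgs L d. X \<sigma> \<rho> * Y \<rho> \<mu>) = X \<sigma> \<rho>1 * Y \<rho>1 \<mu>"
  using assms finite_cfgs[of L d] by (subst sum.remove[of _ \<rho>1]) (auto intro!: sum.neutral)

lemma disjoint_commute:
  assumes X: "acts_on L d A X" and Y: "acts_on L d A' Y" and dj: "A \<inter> A' = {}"
    and AS: "A \<subseteq> sites L" and AS': "A' \<subseteq> sites L"
  shows "commute L d X Y"
  unfolding commute_def op_eq_def
proof (intro ballI)
  fix \<sigma> \<mu> assume s: "\<sigma> \<in> cfgs L d" and m: "\<mu> \<in> cfgs L d"
  define \<rho>1 where "\<rho>1 = merge A \<mu> \<sigma>"
  define \<rho>2 where "\<rho>2 = merge A' \<mu> \<sigma>"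
  have r1: "\<rho>1 \<in> cfgs L d" unfolding \<rho>1_def by (rule merge_cfgs_mixed[OF AS s m])
  have r2: "\<rho>2 \<in> cfgs L d" unfolding \<rho>2_def by (rule merge_cfgs_mixed[OF AS' s m])
  have outC: "\<rho> u = 0" if "\<rho> \<in> cfgs L d" "u \<notin> sites L" for \<rho> u
    using that cfgs_on_out[of \<rho> d "sites L" u] by (simp add: cfgs_def)
  have e1: "(\<Sum>\<rho>\<in>cfgs L d. X \<sigma> \<rho> * Y \<rho> \<mu>) = X \<sigma> \<rho>1 * Y \<rho>1 \<mu>"
  proof (rule mmult_single[OF r1])
    fix \<rho> assume r: "\<rho> \<in> cfgs L d" and ne: "\<rho> \<noteq> \<rho>1"
    then obtain u where u: "\<rho> u \<noteq> \<rho>1 u" by (metis ext)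
    have "u \<in> sites L" using u outC[OF r] outC[OF r1] by metis
    show "X \<sigma> \<rho> * Y \<rho> \<mu> = 0"
    proof (cases "u \<in> A")
      case True
      then have "u \<notin> A'" using dj by auto
      then have "Y \<rho> \<mu> = 0" using u True \<open>u \<in> sites L\<close>
        by (intro acts_on_zero_outside[OF Y r m, of u]) (auto simp: \<rho>1_def merge_def)
      then show ?thesis by simp
    next
      case False
      then have "X \<sigma> \<rho> = 0" using u \<open>u \<in> sites L\<close>
        by (intro acts_on_zero_outside[OF X s r, of u]) (auto simp: \<rho>1_def merge_def)
      then show ?thesis by simp
    qed
  qed
  have e2: "(\<Sum>\<rho>\<in>cfgs L d. Y \<sigma> \<rho> * X \<rho> \<mu>) = Y \<sigma> \<rho>2 * X \<rho>2 \<mu>"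
  proof (rule mmult_single[OF r2])
    fix \<rho> assume r: "\<rho> \<in> cfgs L d" and ne: "\<rho> \<noteq> \<rho>2"
    then obtain u where u: "\<rho> u \<noteq> \<rho>2 u" by (metis ext)
    have "u \<in> sites L" using u outC[OF r] outC[OF r2] by metis
    show "Y \<sigma> \<rho> * X \<rho> \<mu> = 0"
    proof (cases "u \<in> A'")
      case True
      then have "u \<notin> A" using dj by auto
      then have "X \<rho> \<mu> = 0" using u True \<open>u \<in> sites L\<close>
        by (intro acts_on_zero_outside[OF X r m, of u]) (auto simp: \<rho>2_def merge_def)
      then show ?thesis by simp
    next
      case False
      then have "Y \<sigma> \<rho> = 0" using u \<open>u \<in> sites L\<close>
        by (intro acts_on_zero_outside[OF Y s r, of u]) (auto simp: \<rho>2_def merge_def)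
      then show ?thesis by simp
    qed
  qed
  have "X \<sigma> \<rho>1 * Y \<rho>1 \<mu> = Y \<sigma> \<rho>2 * X \<rho>2 \<mu>"
  proof (cases "\<exists>u\<in>sites L. u \<notin> A \<and> u \<notin> A' \<and> \<sigma> u \<noteq> \<mu> u")
    case True
    then obtain u where u: "u \<in> sites L" "u \<notin> A" "u \<notin> A'" "\<sigma> u \<noteq> \<mu> u" by blast
    have "Y \<rho>1 \<mu> = 0" using u by (intro acts_on_zero_outside[OF Y r1 m, of u]) (auto simp: \<rho>1_def merge_def)
    moreover have "X \<rho>2 \<mu> = 0" using u by (intro acts_on_zero_outside[OF X r2 m, of u]) (auto simp: \<rho>2_def merge_def)
    ultimately show ?thesis by simp
  next
    case False
    then have agree: "\<And>u. u \<in> sites L \<Longrightarrow> u \<notin> A \<Longrightarrow> u \<notin> A' \<Longrightarrow> \<sigma> u = \<mu> u" by blast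
    have "X \<rho>2 \<mu> = X \<sigma> \<rho>1"
      by (rule acts_on_transl[OF X s r1 r2 m]) (use dj agree in \<open>auto simp: \<rho>1_def \<rho>2_def merge_def\<close>)
    moreover have "Y \<rho>1 \<mu> = Y \<sigma> \<rho>2"
      by (rule acts_on_transl[OF Y s r2 r1 m]) (use dj agree in \<open>auto simp: \<rho>1_def \<rho>2_def merge_def\<close>)
    ultimately show ?thesis by simp
  qed
  then show "mmult L d X Y \<sigma> \<mu> = mmult L d Y X \<sigma> \<mu>"
    using s m e1 e2 by (simp add: mmult_def)
qed


lemma gamma0_in: "(\<And>u. u \<in> sites L \<Longrightarrow> 1 \<le> d u) \<Longrightarrow> (\<lambda>_. 0) \<in> cfgs_on d (sites L - A)"
  by (rule cfgs_onI) force+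

lemma inner_ev: "\<rho> \<in> cfgs L d \<Longrightarrow> inner L d (ev \<rho>) f = f \<rho>"
proof -
  assume r: "\<rho> \<in> cfgs L d"
  have "inner L d (ev \<rho>) f = (\<Sum>\<sigma>'\<in>cfgs L d. if \<rho> = \<sigma>' then f \<sigma>' else 0)"
    unfolding inner_def by (intro sum.cong) (auto simp: ev_def)
  then show ?thesis using r finite_cfgs[of L d] by simp
qed

lemma herm_matrix:
  assumes "herm L d M" "\<sigma> \<in> cfgs L d" "\<tau> \<in> cfgs L d"
  shows "M \<tau> \<sigma> = cnj (M \<sigma> \<tau>)"
proof -
  have "M \<tau> \<sigma> = inner L d (ev \<tau>) (apply_op L d M (ev \<sigma>))"
    using assms by (simp add: inner_ev apply_op_ev)
  also have "\<dots> = inner L d (apply_op L d M (ev \<tau>)) (ev \<sigma>)" using assms(1) by (simp add: herm_def)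
  also have "\<dots> = cnj (inner L d (ev \<sigma>) (apply_op L d M (ev \<tau>)))" by (rule inner_cnj)
  also have "\<dots> = cnj (M \<sigma> \<tau>)" using assms by (simp add: inner_ev apply_op_ev)
  finally show ?thesis .
qed

lemma idem_matrix:
  assumes "videm L d M" "\<tau> \<in> cfgs L d" "\<tau>' \<in> cfgs L d"
  shows "(\<Sum>\<mu>\<in>cfgs L d. M \<tau> \<mu> * M \<mu> \<tau>') = M \<tau> \<tau>'"
proof -
  have "(\<Sum>\<mu>\<in>cfgs L d. M \<tau> \<mu> * M \<mu> \<tau>') = apply_op L d M (apply_op L d M (ev \<tau>')) \<tau>"
    using assms by (simp add: apply_op_def[of L d M "apply_op L d M (ev \<tau>')"] apply_op_ev)
  also have "\<dots> = apply_op L d M (ev \<tau>') \<tau>" using assms by (simp add: videm_def vec_eq_def)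
  also have "\<dots> = M \<tau> \<tau>'" using assms by (simp add: apply_op_ev)
  finally show ?thesis .
qed

lemma sum3_swap: "(\<Sum>\<mu>\<in>M. \<Sum>\<tau>\<in>T. \<Sum>\<tau>'\<in>T'. F \<tau> \<tau>' \<mu>) = (\<Sum>\<tau>\<in>T. \<Sum>\<tau>'\<in>T'. \<Sum>\<mu>\<in>M. F \<tau> \<tau>' \<mu>)"
  by (subst sum.swap) (rule sum.cong[OF refl], rule sum.swap)

context
  fixes L :: nat and d :: "site \<Rightarrow> nat" and A :: "site set" and Xo :: op
  assumes AS: "A \<subseteq> sites L" and d1: "\<And>u. u \<in> sites L \<Longrightarrow> 1 \<le> d u"
    and OA: "acts_on L d A Xo"
begin

definition OA :: "cfg \<Rightarrow> cfg \<Rightarrow> complex" where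
  "OA \<alpha> \<beta> = Xo (merge A \<alpha> (\<lambda>_. 0)) (merge A \<beta> (\<lambda>_. 0))"

lemma O_merge:
  assumes a: "\<alpha> \<in> cfgs_on d A" and b: "\<beta> \<in> cfgs_on d A"
    and g: "\<gamma> \<in> cfgs_on d (sites L - A)" and g': "\<gamma>' \<in> cfgs_on d (sites L - A)"
  shows "Xo (merge A \<alpha> \<gamma>) (merge A \<beta> \<gamma>') = (if \<gamma> = \<gamma>' then OA \<alpha> \<beta> else 0)"
proof (cases "\<gamma> = \<gamma>'")
  case True
  have g0: "(\<lambda>_. 0) \<in> cfgs_on d (sites L - A)" by (rule gamma0_in[OF d1])
  have "Xo (merge A \<alpha> \<gamma>) (merge A \<beta> \<gamma>) = OA \<alpha> \<beta>"
    unfolding OA_def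
    by (rule acts_on_transl[OF OA merge_in_cfgs[OF AS a g0] merge_in_cfgs[OF AS b g0]
          merge_in_cfgs[OF AS a g] merge_in_cfgs[OF AS b g]]) (auto simp: merge_def)
  then show ?thesis using True by simp
next
  case False
  then obtain u where u: "\<gamma> u \<noteq> \<gamma>' u" by (metis ext)
  have "u \<in> sites L - A"
    using u cfgs_on_out[OF g, of u] cfgs_on_out[OF g', of u] by metis
  then have "Xo (merge A \<alpha> \<gamma>) (merge A \<beta> \<gamma>') = 0"
    using u by (intro acts_on_zero_outside[OF OA merge_in_cfgs[OF AS a g] merge_in_cfgs[OF AS b g'], of u])
      (auto simp: merge_def)
  then show ?thesis using False by simp
qed

lemma O_row:
  assumes a: "\<alpha> \<in> cfgs_on d A" and g: "\<gamma> \<in> cfgs_on d (sites L - A)"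
  shows "(\<Sum>\<tau>\<in>cfgs L d. Xo (merge A \<alpha> \<gamma>) \<tau> * F \<tau>) = (\<Sum>\<beta>\<in>cfgs_on d A. OA \<alpha> \<beta> * F (merge A \<beta> \<gamma>))"
proof -
  have fin': "finite (cfgs_on d (sites L - A))" by (simp add: finite_cfgs_on finite_sites)
  have "(\<Sum>\<tau>\<in>cfgs L d. Xo (merge A \<alpha> \<gamma>) \<tau> * F \<tau>)
      = (\<Sum>\<beta>\<in>cfgs_on d A. \<Sum>\<gamma>'\<in>cfgs_on d (sites L - A). Xo (merge A \<alpha> \<gamma>) (merge A \<beta> \<gamma>') * F (merge A \<beta> \<gamma>'))"
    by (rule sum_cfgs_split[OF AS])
  also have "\<dots> = (\<Sum>\<beta>\<in>cfgs_on d A. \<Sum>\<gamma>'\<in>cfgs_on d (sites L - A). if \<gamma> = \<gamma>' then OA \<alpha> \<beta> * F (merge A \<beta> \<gamma>') else 0)"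
    by (intro sum.cong refl) (simp add: O_merge[OF a _ g])
  also have "\<dots> = (\<Sum>\<beta>\<in>cfgs_on d A. OA \<alpha> \<beta> * F (merge A \<beta> \<gamma>))"
    using fin' g by simp
  finally show ?thesis .
qed

lemma lemma2:
  assumes hP: "op_eq L d P (adjoint P)"
    and OP: "op_eq L d (mmult L d Xo P) (\<lambda>_ _. 0)"
    and ker: "rkernel d A (ptrace L d A P) \<subseteq> rkernel d A (ptrace L d A PB)"
    and hB: "herm L d PB" and iB: "videm L d PB"
  shows "vec_eq L d (apply_op L d Xo (apply_op L d PB \<psi>)) (\<lambda>_. 0)"
proof -
  let ?CA = "cfgs_on d A" and ?CA' = "cfgs_on d (sites L - A)" and ?C = "cfgs L d"
  let ?m = "merge A"
  define \<rho> where "\<rho> = ptrace L d A P"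
  define \<rho>B where "\<rho>B = ptrace L d A PB"
  have fin: "finite ?C" by (rule finite_cfgs)
  have mC: "?m \<alpha> \<gamma> \<in> ?C" if "\<alpha> \<in> ?CA" "\<gamma> \<in> ?CA'" for \<alpha> \<gamma> using merge_in_cfgs[OF AS that] .
  have s1: "(\<Sum>\<beta>'\<in>?CA. OA \<alpha> \<beta>' * \<rho> \<beta>' \<beta>) = 0" if a: "\<alpha> \<in> ?CA" and b: "\<beta> \<in> ?CA" for \<alpha> \<beta>
  proof -
    have z: "\<forall>\<gamma>\<in>?CA'. mmult L d Xo P (?m \<alpha> \<gamma>) (?m \<beta> \<gamma>) = 0"
      using OP mC a b by (auto simp: op_eq_def)
    have "0 = (\<Sum>\<gamma>\<in>?CA'. mmult L d Xo P (?m \<alpha> \<gamma>) (?m \<beta> \<gamma>))"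
      using z by simp
    also have "\<dots> = (\<Sum>\<gamma>\<in>?CA'. \<Sum>\<beta>'\<in>?CA. OA \<alpha> \<beta>' * P (?m \<beta>' \<gamma>) (?m \<beta> \<gamma>))"
    proof (rule sum.cong[OF refl])
      fix \<gamma> assume g: "\<gamma> \<in> ?CA'"
      have "mmult L d Xo P (?m \<alpha> \<gamma>) (?m \<beta> \<gamma>) = (\<Sum>\<tau>\<in>?C. Xo (?m \<alpha> \<gamma>) \<tau> * P \<tau> (?m \<beta> \<gamma>))"
        using mC[OF a g] mC[OF b g] by (simp add: mmult_def)
      also have "\<dots> = (\<Sum>\<beta>'\<in>?CA. OA \<alpha> \<beta>' * P (?m \<beta>' \<gamma>) (?m \<beta> \<gamma>))"
        by (rule O_row[OF a g])
      finally show "mmult L d Xo P (?m \<alpha> \<gamma>) (?m \<beta> \<gamma>) = (\<Sum>\<beta>'\<in>?CA. OA \<alpha> \<beta>' * P (?m \<beta>' \<gamma>) (?m \<beta> \<gamma>))" .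
    qed
    also have "\<dots> = (\<Sum>\<beta>'\<in>?CA. OA \<alpha> \<beta>' * \<rho> \<beta>' \<beta>)"
      by (simp add: \<rho>_def ptrace_def sum_distrib_left) (rule sum.swap)
    finally show ?thesis by simp
  qed
  have s2: "\<rho> \<beta> \<beta>' = cnj (\<rho> \<beta>' \<beta>)" if b: "\<beta> \<in> ?CA" and b': "\<beta>' \<in> ?CA" for \<beta> \<beta>'
    unfolding \<rho>_def ptrace_def cnj_sum
  proof (rule sum.cong[OF refl])
    fix \<gamma> assume g: "\<gamma> \<in> ?CA'"
    show "P (?m \<beta> \<gamma>) (?m \<beta>' \<gamma>) = cnj (P (?m \<beta>' \<gamma>) (?m \<beta> \<gamma>))"
      using hP mC[OF b g] mC[OF b' g] unfolding op_eq_def adjoint_def by blast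
  qed
  have s4: "(\<Sum>\<beta>'\<in>?CA. \<rho>B \<beta> \<beta>' * cnj (OA \<alpha> \<beta>')) = 0" if a: "\<alpha> \<in> ?CA" and b: "\<beta> \<in> ?CA" for \<alpha> \<beta>
  proof -
    have "(\<lambda>\<beta>. cnj (OA \<alpha> \<beta>)) \<in> rkernel d A \<rho>"
      unfolding rkernel_def
    proof (intro CollectI ballI)
      fix \<beta> assume b: "\<beta> \<in> ?CA"
      have "(\<Sum>\<beta>'\<in>?CA. \<rho> \<beta> \<beta>' * cnj (OA \<alpha> \<beta>')) = (\<Sum>\<beta>'\<in>?CA. cnj (OA \<alpha> \<beta>' * \<rho> \<beta>' \<beta>))"
      proof (rule sum.cong[OF refl])
        fix \<beta>' assume b': "\<beta>' \<in> ?CA"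
        have "\<rho> \<beta> \<beta>' = cnj (\<rho> \<beta>' \<beta>)" by (rule s2[OF b b'])
        then show "\<rho> \<beta> \<beta>' * cnj (OA \<alpha> \<beta>') = cnj (OA \<alpha> \<beta>' * \<rho> \<beta>' \<beta>)" by simp
      qed
      also have "\<dots> = cnj (\<Sum>\<beta>'\<in>?CA. OA \<alpha> \<beta>' * \<rho> \<beta>' \<beta>)" by simp
      also have "\<dots> = 0" using s1[OF a b] by simp
      finally show "(\<Sum>\<beta>'\<in>?CA. \<rho> \<beta> \<beta>' * cnj (OA \<alpha> \<beta>')) = 0" .
    qed
    then have "(\<lambda>\<beta>. cnj (OA \<alpha> \<beta>)) \<in> rkernel d A \<rho>B" using ker by (simp add: \<rho>_def \<rho>B_def subset_iff)
    then show ?thesis using b by (simp add: rkernel_def)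
  qed
  define Z where "Z \<sigma> \<mu> = (\<Sum>\<tau>\<in>?C. Xo \<sigma> \<tau> * PB \<tau> \<mu>)" for \<sigma> \<mu>
  have hBm: "PB \<tau> \<sigma> = cnj (PB \<sigma> \<tau>)" if "\<sigma> \<in> ?C" "\<tau> \<in> ?C" for \<sigma> \<tau>
    using herm_matrix[OF hB that] .
  have iBm: "(\<Sum>\<mu>\<in>?C. PB \<tau> \<mu> * PB \<mu> \<tau>') = PB \<tau> \<tau>'" if "\<tau> \<in> ?C" "\<tau>' \<in> ?C" for \<tau> \<tau>'
    using idem_matrix[OF iB that] .
  have rowsum: "(\<Sum>\<mu>\<in>?C. Z \<sigma> \<mu> * cnj (Z \<sigma> \<mu>)) = (\<Sum>\<tau>\<in>?C. \<Sum>\<tau>'\<in>?C. Xo \<sigma> \<tau> * cnj (Xo \<sigma> \<tau>') * PB \<tau> \<tau>')" for \<sigma>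
  proof -
    have e1: "Z \<sigma> \<mu> * cnj (Z \<sigma> \<mu>) = (\<Sum>\<tau>\<in>?C. \<Sum>\<tau>'\<in>?C. (Xo \<sigma> \<tau> * cnj (Xo \<sigma> \<tau>')) * (PB \<tau> \<mu> * cnj (PB \<tau>' \<mu>)))" for \<mu>
      unfolding Z_def cnj_sum sum_product by (simp add: mult_ac)
    have "(\<Sum>\<mu>\<in>?C. Z \<sigma> \<mu> * cnj (Z \<sigma> \<mu>))
        = (\<Sum>\<mu>\<in>?C. \<Sum>\<tau>\<in>?C. \<Sum>\<tau>'\<in>?C. (Xo \<sigma> \<tau> * cnj (Xo \<sigma> \<tau>')) * (PB \<tau> \<mu> * cnj (PB \<tau>' \<mu>)))"
      by (simp only: e1)
    also have "\<dots> = (\<Sum>\<tau>\<in>?C. \<Sum>\<tau>'\<in>?C. \<Sum>\<mu>\<in>?C. (Xo \<sigma> \<tau> * cnj (Xo \<sigma> \<tau>')) * (PB \<tau> \<mu> * cnj (PB \<tau>' \<mu>)))"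
      by (rule sum3_swap)
    also have "\<dots> = (\<Sum>\<tau>\<in>?C. \<Sum>\<tau>'\<in>?C. (Xo \<sigma> \<tau> * cnj (Xo \<sigma> \<tau>')) * (\<Sum>\<mu>\<in>?C. PB \<tau> \<mu> * cnj (PB \<tau>' \<mu>)))"
      by (simp only: sum_distrib_left)
    also have "\<dots> = (\<Sum>\<tau>\<in>?C. \<Sum>\<tau>'\<in>?C. Xo \<sigma> \<tau> * cnj (Xo \<sigma> \<tau>') * PB \<tau> \<tau>')"
    proof (rule sum.cong[OF refl], rule sum.cong[OF refl])
      fix \<tau> \<tau>' assume t: "\<tau> \<in> ?C" and t': "\<tau>' \<in> ?C"
      have "(\<Sum>\<mu>\<in>?C. PB \<tau> \<mu> * cnj (PB \<tau>' \<mu>)) = (\<Sum>\<mu>\<in>?C. PB \<tau> \<mu> * PB \<mu> \<tau>')"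
      proof (rule sum.cong[OF refl])
        fix \<mu> assume mu: "\<mu> \<in> ?C"
        have "PB \<mu> \<tau>' = cnj (PB \<tau>' \<mu>)" by (rule hBm[OF t' mu])
        then show "PB \<tau> \<mu> * cnj (PB \<tau>' \<mu>) = PB \<tau> \<mu> * PB \<mu> \<tau>'" by simp
      qed
      then show "Xo \<sigma> \<tau> * cnj (Xo \<sigma> \<tau>') * (\<Sum>\<mu>\<in>?C. PB \<tau> \<mu> * cnj (PB \<tau>' \<mu>)) = Xo \<sigma> \<tau> * cnj (Xo \<sigma> \<tau>') * PB \<tau> \<tau>'"
        using iBm[OF t t'] by simp
    qed
    finally show ?thesis .
  qed
  have merged: "(\<Sum>\<tau>\<in>?C. \<Sum>\<tau>'\<in>?C. Xo (?m \<alpha> \<gamma>) \<tau> * cnj (Xo (?m \<alpha> \<gamma>) \<tau>') * PB \<tau> \<tau>')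
      = (\<Sum>\<beta>\<in>?CA. \<Sum>\<beta>'\<in>?CA. OA \<alpha> \<beta> * cnj (OA \<alpha> \<beta>') * PB (?m \<beta> \<gamma>) (?m \<beta>' \<gamma>))"
    if a: "\<alpha> \<in> ?CA" and g: "\<gamma> \<in> ?CA'" for \<alpha> \<gamma>
  proof -
    have inner_s: "(\<Sum>\<tau>'\<in>?C. cnj (Xo (?m \<alpha> \<gamma>) \<tau>') * F \<tau>') = (\<Sum>\<beta>'\<in>?CA. cnj (OA \<alpha> \<beta>') * F (?m \<beta>' \<gamma>))" for F
    proof -
      have "(\<Sum>\<tau>'\<in>?C. cnj (Xo (?m \<alpha> \<gamma>) \<tau>') * F \<tau>') = cnj (\<Sum>\<tau>'\<in>?C. Xo (?m \<alpha> \<gamma>) \<tau>' * cnj (F \<tau>'))" by simp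
      also have "\<dots> = cnj (\<Sum>\<beta>'\<in>?CA. OA \<alpha> \<beta>' * cnj (F (?m \<beta>' \<gamma>)))" by (simp only: O_row[OF a g])
      also have "\<dots> = (\<Sum>\<beta>'\<in>?CA. cnj (OA \<alpha> \<beta>') * F (?m \<beta>' \<gamma>))" by simp
      finally show ?thesis .
    qed
    have "(\<Sum>\<tau>\<in>?C. \<Sum>\<tau>'\<in>?C. Xo (?m \<alpha> \<gamma>) \<tau> * cnj (Xo (?m \<alpha> \<gamma>) \<tau>') * PB \<tau> \<tau>')
        = (\<Sum>\<tau>\<in>?C. Xo (?m \<alpha> \<gamma>) \<tau> * (\<Sum>\<tau>'\<in>?C. cnj (Xo (?m \<alpha> \<gamma>) \<tau>') * PB \<tau> \<tau>'))"
      by (simp only: sum_distrib_left mult.assoc)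
    also have "\<dots> = (\<Sum>\<beta>\<in>?CA. OA \<alpha> \<beta> * (\<Sum>\<tau>'\<in>?C. cnj (Xo (?m \<alpha> \<gamma>) \<tau>') * PB (?m \<beta> \<gamma>) \<tau>'))"
      by (rule O_row[OF a g])
    also have "\<dots> = (\<Sum>\<beta>\<in>?CA. OA \<alpha> \<beta> * (\<Sum>\<beta>'\<in>?CA. cnj (OA \<alpha> \<beta>') * PB (?m \<beta> \<gamma>) (?m \<beta>' \<gamma>)))"
      by (simp only: inner_s)
    also have "\<dots> = (\<Sum>\<beta>\<in>?CA. \<Sum>\<beta>'\<in>?CA. OA \<alpha> \<beta> * cnj (OA \<alpha> \<beta>') * PB (?m \<beta> \<gamma>) (?m \<beta>' \<gamma>))"
      by (simp only: sum_distrib_left mult.assoc)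
    finally show ?thesis .
  qed
  have total: "(\<Sum>\<sigma>\<in>?C. \<Sum>\<mu>\<in>?C. Z \<sigma> \<mu> * cnj (Z \<sigma> \<mu>)) = 0"
  proof -
    have "(\<Sum>\<sigma>\<in>?C. \<Sum>\<mu>\<in>?C. Z \<sigma> \<mu> * cnj (Z \<sigma> \<mu>))
        = (\<Sum>\<sigma>\<in>?C. \<Sum>\<tau>\<in>?C. \<Sum>\<tau>'\<in>?C. Xo \<sigma> \<tau> * cnj (Xo \<sigma> \<tau>') * PB \<tau> \<tau>')"
      by (simp only: rowsum)
    also have "\<dots> = (\<Sum>\<alpha>\<in>?CA. \<Sum>\<gamma>\<in>?CA'. \<Sum>\<tau>\<in>?C. \<Sum>\<tau>'\<in>?C. Xo (?m \<alpha> \<gamma>) \<tau> * cnj (Xo (?m \<alpha> \<gamma>) \<tau>') * PB \<tau> \<tau>')"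
      by (rule sum_cfgs_split[OF AS])
    also have "\<dots> = (\<Sum>\<alpha>\<in>?CA. \<Sum>\<gamma>\<in>?CA'. \<Sum>\<beta>\<in>?CA. \<Sum>\<beta>'\<in>?CA. OA \<alpha> \<beta> * cnj (OA \<alpha> \<beta>') * PB (?m \<beta> \<gamma>) (?m \<beta>' \<gamma>))"
    proof (rule sum.cong[OF refl], rule sum.cong[OF refl])
      fix \<alpha> \<gamma> assume a: "\<alpha> \<in> ?CA" and g: "\<gamma> \<in> ?CA'"
      show "(\<Sum>\<tau>\<in>?C. \<Sum>\<tau>'\<in>?C. Xo (?m \<alpha> \<gamma>) \<tau> * cnj (Xo (?m \<alpha> \<gamma>) \<tau>') * PB \<tau> \<tau>')
          = (\<Sum>\<beta>\<in>?CA. \<Sum>\<beta>'\<in>?CA. OA \<alpha> \<beta> * cnj (OA \<alpha> \<beta>') * PB (?m \<beta> \<gamma>) (?m \<beta>' \<gamma>))"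
        by (rule merged[OF a g])
    qed
    also have "\<dots> = (\<Sum>\<alpha>\<in>?CA. \<Sum>\<beta>\<in>?CA. OA \<alpha> \<beta> * (\<Sum>\<beta>'\<in>?CA. \<rho>B \<beta> \<beta>' * cnj (OA \<alpha> \<beta>')))"
    proof (rule sum.cong[OF refl])
      fix \<alpha> assume "\<alpha> \<in> ?CA"
      have "(\<Sum>\<gamma>\<in>?CA'. \<Sum>\<beta>\<in>?CA. \<Sum>\<beta>'\<in>?CA. OA \<alpha> \<beta> * cnj (OA \<alpha> \<beta>') * PB (?m \<beta> \<gamma>) (?m \<beta>' \<gamma>))
          = (\<Sum>\<beta>\<in>?CA. \<Sum>\<beta>'\<in>?CA. \<Sum>\<gamma>\<in>?CA'. OA \<alpha> \<beta> * cnj (OA \<alpha> \<beta>') * PB (?m \<beta> \<gamma>) (?m \<beta>' \<gamma>))"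
        by (rule sum3_swap)
      also have "\<dots> = (\<Sum>\<beta>\<in>?CA. \<Sum>\<beta>'\<in>?CA. OA \<alpha> \<beta> * cnj (OA \<alpha> \<beta>') * \<rho>B \<beta> \<beta>')"
        by (simp only: \<rho>B_def ptrace_def sum_distrib_left)
      also have "\<dots> = (\<Sum>\<beta>\<in>?CA. OA \<alpha> \<beta> * (\<Sum>\<beta>'\<in>?CA. \<rho>B \<beta> \<beta>' * cnj (OA \<alpha> \<beta>')))"
        by (simp add: sum_distrib_left mult_ac)
      finally show "(\<Sum>\<gamma>\<in>?CA'. \<Sum>\<beta>\<in>?CA. \<Sum>\<beta>'\<in>?CA. OA \<alpha> \<beta> * cnj (OA \<alpha> \<beta>') * PB (?m \<beta> \<gamma>) (?m \<beta>' \<gamma>))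
          = (\<Sum>\<beta>\<in>?CA. OA \<alpha> \<beta> * (\<Sum>\<beta>'\<in>?CA. \<rho>B \<beta> \<beta>' * cnj (OA \<alpha> \<beta>')))" .
    qed
    also have "\<dots> = 0" using s4 by simp
    finally show ?thesis .
  qed
  have Z0: "Z \<sigma> \<mu> = 0" if "\<sigma> \<in> ?C" "\<mu> \<in> ?C" for \<sigma> \<mu>
  proof -
    have e: "Z \<sigma> \<mu> * cnj (Z \<sigma> \<mu>) = of_real ((cmod (Z \<sigma> \<mu>))\<^sup>2)" for \<sigma> \<mu>
      by (rule complex_norm_square[symmetric])
    have "complex_of_real (\<Sum>\<sigma>\<in>?C. \<Sum>\<mu>\<in>?C. (cmod (Z \<sigma> \<mu>))\<^sup>2) = 0"
      using total by (simp only: e of_real_sum)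
    then have T: "(\<Sum>\<sigma>\<in>?C. \<Sum>\<mu>\<in>?C. (cmod (Z \<sigma> \<mu>))\<^sup>2) = 0" by (simp only: of_real_eq_0_iff)
    have "(\<Sum>\<mu>\<in>?C. (cmod (Z \<sigma> \<mu>))\<^sup>2) = 0"
      using T fin that by (simp add: sum_nonneg sum_nonneg_eq_0_iff)
    then have "(cmod (Z \<sigma> \<mu>))\<^sup>2 = 0" using fin that by (simp add: sum_nonneg_eq_0_iff)
    then show ?thesis by simp
  qed
  show ?thesis
    unfolding vec_eq_def
  proof
    fix \<sigma> assume s: "\<sigma> \<in> ?C"
    have "apply_op L d Xo (apply_op L d PB \<psi>) \<sigma> = (\<Sum>\<mu>\<in>?C. Z \<sigma> \<mu> * \<psi> \<mu>)"
      by (simp add: apply_op_def Z_def sum_distrib_left sum_distrib_right mult.assoc) (rule sum.swap)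
    also have "\<dots> = 0" using Z0 s by simp
    finally show "apply_op L d Xo (apply_op L d PB \<psi>) \<sigma> = 0" .
  qed
qed

end


context
  fixes L :: nat and d :: "site \<Rightarrow> nat"
begin

lemma vnorm_add_orth:
  assumes "inner L d a b = 0"
  shows "(vnorm L d (a + b))\<^sup>2 = (vnorm L d a)\<^sup>2 + (vnorm L d b)\<^sup>2"
proof -
  have "inner L d b a = 0" using assms inner_cnj[of L d b a] by simp
  then show ?thesis using assms
    by (simp add: vnorm_sq inner_add_left inner_add_right)
qed

lemma proj_pyth:
  assumes h: "herm L d P" and i: "videm L d P"
  shows "(vnorm L d \<chi>)\<^sup>2 = (vnorm L d (apply_op L d P \<chi>))\<^sup>2 + (vnorm L d (\<chi> - apply_op L d P \<chi>))\<^sup>2"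
proof -
  have o: "inner L d (apply_op L d P \<chi>) (\<chi> - apply_op L d P \<chi>) = 0"
  proof -
    have "inner L d (apply_op L d P \<chi>) (\<chi> - apply_op L d P \<chi>) = inner L d \<chi> (apply_op L d P (\<chi> - apply_op L d P \<chi>))"
      using h by (simp add: herm_def)
    also have "apply_op L d P (\<chi> - apply_op L d P \<chi>) = apply_op L d P \<chi> - apply_op L d P (apply_op L d P \<chi>)"
      by (rule apply_op_diff)
    also have "inner L d \<chi> \<dots> = 0"
      using i by (simp add: inner_diff_right videm_def) (rule inner_cong, auto simp: vec_eq_def)
    finally show ?thesis .
  qed
  have "\<chi> = apply_op L d P \<chi> + (\<chi> - apply_op L d P \<chi>)" by simp
  then have "(vnorm L d \<chi>)\<^sup>2 = (vnorm L d (apply_op L d P \<chi> + (\<chi> - apply_op L d P \<chi>)))\<^sup>2" by simp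
  also have "\<dots> = (vnorm L d (apply_op L d P \<chi>))\<^sup>2 + (vnorm L d (\<chi> - apply_op L d P \<chi>))\<^sup>2"
    by (rule vnorm_add_orth[OF o])
  finally show ?thesis .
qed

lemma proj_contr:
  assumes h: "herm L d P" and i: "videm L d P"
  shows "vnorm L d (apply_op L d P \<chi>) \<le> vnorm L d \<chi>"
proof -
  have "(vnorm L d (apply_op L d P \<chi>))\<^sup>2 \<le> (vnorm L d \<chi>)\<^sup>2"
    using proj_pyth[OF h i, of \<chi>] by simp
  then show ?thesis using vnorm_nonneg by (simp add: power2_le_iff_abs_le)
qed

lemma mmult_mmult:
  "mmult L d Y (mmult L d X M) = mmult L d (mmult L d Y X) M"
proof (intro ext)
  fix \<sigma> \<tau>
  show "mmult L d Y (mmult L d X M) \<sigma> \<tau> = mmult L d (mmult L d Y X) M \<sigma> \<tau>"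
  proof (cases "\<sigma> \<in> cfgs L d \<and> \<tau> \<in> cfgs L d")
    case True
    have "mmult L d Y (mmult L d X M) \<sigma> \<tau> = (\<Sum>\<rho>\<in>cfgs L d. Y \<sigma> \<rho> * (\<Sum>\<rho>'\<in>cfgs L d. X \<rho> \<rho>' * M \<rho>' \<tau>))"
      using True unfolding mmult_def by (auto intro!: sum.cong)
    also have "\<dots> = (\<Sum>\<rho>\<in>cfgs L d. \<Sum>\<rho>'\<in>cfgs L d. Y \<sigma> \<rho> * X \<rho> \<rho>' * M \<rho>' \<tau>)"
      by (simp only: sum_distrib_left mult.assoc)
    also have "\<dots> = (\<Sum>\<rho>'\<in>cfgs L d. \<Sum>\<rho>\<in>cfgs L d. Y \<sigma> \<rho> * X \<rho> \<rho>' * M \<rho>' \<tau>)"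
      by (rule sum.swap)
    also have "\<dots> = (\<Sum>\<rho>'\<in>cfgs L d. (\<Sum>\<rho>\<in>cfgs L d. Y \<sigma> \<rho> * X \<rho> \<rho>') * M \<rho>' \<tau>)"
      by (simp only: sum_distrib_right)
    also have "\<dots> = mmult L d (mmult L d Y X) M \<sigma> \<tau>"
      using True unfolding mmult_def by (auto intro!: sum.cong)
    finally show ?thesis .
  next
    case False then show ?thesis by (auto simp: mmult_def)
  qed
qed

lemma op_eq_mmult_eq: "op_eq L d X Y \<Longrightarrow> mmult L d X M = mmult L d Y M"
  by (auto simp: fun_eq_iff mmult_def op_eq_def intro!: sum.cong)

lemma vcomm_op_eq:
  assumes "vcomm L d X Y"
  shows "op_eq L d (mmult L d X Y) (mmult L d Y X)"
proof (rule op_eqI_vec)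
  fix \<psi>
  show "vec_eq L d (apply_op L d (mmult L d X Y) \<psi>) (apply_op L d (mmult L d Y X) \<psi>)"
    using apply_op_mmult_vec[of L d X Y \<psi>] apply_op_mmult_vec[of L d Y X \<psi>] assms
    by (auto simp: vcomm_def vec_eq_def)
qed

definition pfold :: "(site set \<Rightarrow> op) \<Rightarrow> site set set \<Rightarrow> op" where
  "pfold PA T = Finite_Set.fold (\<lambda>A M. mmult L d (PA A) M) (idop L d) T"

lemma pfold_cfc:
  assumes c: "\<And>i j. i \<in> S \<Longrightarrow> j \<in> S \<Longrightarrow> vcomm L d (PA i) (PA j)"
  shows "comp_fun_commute_on S (\<lambda>A M. mmult L d (PA A) M)"
proof
  fix x y assume x: "x \<in> S" and y: "y \<in> S"
  show "(\<lambda>M. mmult L d (PA y) M) \<circ> (\<lambda>M. mmult L d (PA x) M) = (\<lambda>M. mmult L d (PA x) M) \<circ> (\<lambda>M. mmult L d (PA y) M)"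
    using op_eq_mmult_eq[OF vcomm_op_eq[OF c[OF y x]]] by (simp add: fun_eq_iff mmult_mmult)
qed

lemma pfold_empty: "vec_eq L d (apply_op L d (pfold PA {}) \<psi>) \<psi>"
  unfolding vec_eq_def
proof
  fix \<sigma> assume s: "\<sigma> \<in> cfgs L d"
  have "apply_op L d (pfold PA {}) \<psi> \<sigma> = (\<Sum>\<tau>\<in>cfgs L d. if \<sigma> = \<tau> then \<psi> \<tau> else 0)"
    unfolding pfold_def apply_op_def using s by (intro sum.cong) (auto simp: idop_def)
  also have "\<dots> = \<psi> \<sigma>" using s finite_cfgs[of L d] by simp
  finally show "apply_op L d (pfold PA {}) \<psi> \<sigma> = \<psi> \<sigma>" .
qed

lemma pfold_insert:
  assumes c: "\<And>i j. i \<in> S \<Longrightarrow> j \<in> S \<Longrightarrow> vcomm L d (PA i) (PA j)"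
    and T: "insert x T \<subseteq> S" "finite T" "x \<notin> T"
  shows "vec_eq L d (apply_op L d (pfold PA (insert x T)) \<psi>) (apply_op L d (PA x) (apply_op L d (pfold PA T) \<psi>))"
proof -
  interpret comp_fun_commute_on S "\<lambda>A M. mmult L d (PA A) M" by (rule pfold_cfc[OF c])
  have "pfold PA (insert x T) = mmult L d (PA x) (pfold PA T)"
    unfolding pfold_def using T by (rule fold_insert)
  then show ?thesis by (simp add: apply_op_mmult_vec)
qed

lemma pfold_props:
  assumes c: "\<And>i j. i \<in> S \<Longrightarrow> j \<in> S \<Longrightarrow> vcomm L d (PA i) (PA j)"
    and h: "\<And>i. i \<in> S \<Longrightarrow> herm L d (PA i)" and id: "\<And>i. i \<in> S \<Longrightarrow> videm L d (PA i)"
    and T: "finite T" "T \<subseteq> S"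
  shows "(\<forall>X. (\<forall>i\<in>T. vcomm L d X (PA i)) \<longrightarrow> vcomm L d X (pfold PA T))
        \<and> herm L d (pfold PA T) \<and> videm L d (pfold PA T)
        \<and> (\<forall>\<psi>. (vnorm L d (\<psi> - apply_op L d (pfold PA T) \<psi>))\<^sup>2 \<le> (\<Sum>i\<in>T. (vnorm L d (\<psi> - apply_op L d (PA i) \<psi>))\<^sup>2))"
  using T
proof (induction T rule: finite_induct)
  case empty
  have e: "apply_op L d (pfold PA {}) \<psi> = apply_op L d (pfold PA {}) \<psi>" for \<psi> ..
  have E: "vec_eq L d (apply_op L d (pfold PA {}) \<psi>) \<psi>" for \<psi> by (rule pfold_empty)
  have E2: "apply_op L d M (apply_op L d (pfold PA {}) \<psi>) = apply_op L d M \<psi>" for M \<psi>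
    by (rule apply_op_cong[OF E])
  have c0: "vcomm L d X (pfold PA {})" for X
    using E E2 by (auto simp: vcomm_def vec_eq_def)
  have h0: "herm L d (pfold PA {})"
    unfolding herm_def by (simp only: inner_cong[OF vec_eq_refl E] inner_cong[OF E vec_eq_refl]) simp
  have i0: "videm L d (pfold PA {})"
    unfolding videm_def using E E2 by (auto simp: vec_eq_def)
  have n0: "(vnorm L d (\<psi> - apply_op L d (pfold PA {}) \<psi>))\<^sup>2 \<le> 0" for \<psi>
  proof -
    have "vec_eq L d (\<psi> - apply_op L d (pfold PA {}) \<psi>) (\<lambda>_. 0)" using E by (simp add: vec_eq_def)
    then show ?thesis by (simp add: vnorm_zero_iff)
  qed
  have n0': "(vnorm L d (\<psi> - apply_op L d (pfold PA {}) \<psi>))\<^sup>2 \<le> (\<Sum>i\<in>{}. (vnorm L d (\<psi> - apply_op L d (PA i) \<psi>))\<^sup>2)" for \<psi>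
    using n0[of \<psi>] by (simp only: sum.empty)
  show ?case using c0 h0 i0 n0' by blast
next
  case (insert x T)
  then have xS: "x \<in> S" and TS: "T \<subseteq> S" by simp_all
  note IH = insert.IH[OF TS]
  have IHc: "\<And>X. (\<forall>i\<in>T. vcomm L d X (PA i)) \<Longrightarrow> vcomm L d X (pfold PA T)"
    using conjunct1[OF IH] by simp
  have hF: "herm L d (pfold PA T)" using conjunct1[OF conjunct2[OF IH]] .
  have iF: "videm L d (pfold PA T)" using conjunct1[OF conjunct2[OF conjunct2[OF IH]]] .
  have IHn: "\<And>\<psi>. (vnorm L d (\<psi> - apply_op L d (pfold PA T) \<psi>))\<^sup>2 \<le> (\<Sum>i\<in>T. (vnorm L d (\<psi> - apply_op L d (PA i) \<psi>))\<^sup>2)"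
    by (rule spec[OF conjunct2[OF conjunct2[OF conjunct2[OF IH]]]])
  let ?F = "apply_op L d (pfold PA T)" and ?Fi = "apply_op L d (pfold PA (insert x T))"
    and ?P = "apply_op L d (PA x)"
  have ins: "vec_eq L d (?Fi \<psi>) (?P (?F \<psi>))" for \<psi>
    by (rule pfold_insert[OF c insert.prems insert.hyps(1,2)])
  have ins2: "apply_op L d M (?Fi \<psi>) = apply_op L d M (?P (?F \<psi>))" for M \<psi>
    by (rule apply_op_cong[OF ins])
  have "\<forall>i\<in>T. vcomm L d (PA x) (PA i)" using c xS TS by blast
  then have cPF: "vcomm L d (PA x) (pfold PA T)" by (rule IHc)
  have comm: "vcomm L d X (pfold PA (insert x T))" if X: "\<forall>i\<in>insert x T. vcomm L d X (PA i)" for X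
  proof -
    have cX: "vcomm L d X (pfold PA T)" using X by (intro IHc) blast
    have cXP: "vcomm L d X (PA x)" using X by blast
    show ?thesis
      unfolding vcomm_def
    proof
      fix \<psi>
      have "vec_eq L d (apply_op L d X (?Fi \<psi>)) (apply_op L d X (?P (?F \<psi>)))"
        by (simp add: ins2)
      moreover have "vec_eq L d (apply_op L d X (?P (?F \<psi>))) (?P (apply_op L d X (?F \<psi>)))"
        using cXP by (simp add: vcomm_def)
      moreover have "?P (apply_op L d X (?F \<psi>)) = ?P (?F (apply_op L d X \<psi>))"
        using cX by (intro apply_op_cong) (simp add: vcomm_def)
      moreover have "vec_eq L d (?P (?F (apply_op L d X \<psi>))) (?Fi (apply_op L d X \<psi>))"
        using ins vec_eq_sym by blast
      ultimately show "vec_eq L d (apply_op L d X (?Fi \<psi>)) (?Fi (apply_op L d X \<psi>))"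
        by (auto simp: vec_eq_def)
    qed
  qed
  have hx: "herm L d (PA x)" using h xS by blast
  have ix: "videm L d (PA x)" using id xS by blast
  have herm: "herm L d (pfold PA (insert x T))"
    unfolding herm_def
  proof (intro allI)
    fix \<phi> \<psi>
    have "inner L d \<phi> (?Fi \<psi>) = inner L d \<phi> (?P (?F \<psi>))" by (rule inner_cong[OF vec_eq_refl ins])
    also have "\<dots> = inner L d (?F (?P \<phi>)) \<psi>" using hx hF by (simp add: herm_def)
    also have "\<dots> = inner L d (?P (?F \<phi>)) \<psi>"
      using cPF by (intro inner_cong) (auto simp: vcomm_def vec_eq_def)
    also have "\<dots> = inner L d (?Fi \<phi>) \<psi>" by (rule inner_cong[OF vec_eq_sym[OF ins] vec_eq_refl])
    finally show "inner L d \<phi> (?Fi \<psi>) = inner L d (?Fi \<phi>) \<psi>" .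
  qed
  have idem: "videm L d (pfold PA (insert x T))"
    unfolding videm_def
  proof
    fix \<psi>
    have "?Fi (?Fi \<psi>) = ?Fi (?P (?F \<psi>))" by (rule ins2)
    moreover have "vec_eq L d (?Fi (?P (?F \<psi>))) (?P (?F (?P (?F \<psi>))))" by (rule ins)
    moreover have "vec_eq L d (?F (?P (?F \<psi>))) (?P (?F (?F \<psi>)))"
      using cPF by (simp add: vcomm_def vec_eq_def)
    then have "?P (?F (?P (?F \<psi>))) = ?P (?P (?F (?F \<psi>)))" by (rule apply_op_cong)
    moreover have "vec_eq L d (?P (?P (?F (?F \<psi>)))) (?P (?F (?F \<psi>)))" using ix by (simp add: videm_def)
    moreover have "?P (?F (?F \<psi>)) = ?P (?F \<psi>)" using iF by (intro apply_op_cong) (simp add: videm_def)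
    moreover have "vec_eq L d (?P (?F \<psi>)) (?Fi \<psi>)" using ins vec_eq_sym by blast
    ultimately show "vec_eq L d (?Fi (?Fi \<psi>)) (?Fi \<psi>)" by (simp add: vec_eq_def)
  qed
  have nrm: "(vnorm L d (\<psi> - ?Fi \<psi>))\<^sup>2 \<le> (\<Sum>i\<in>insert x T. (vnorm L d (\<psi> - apply_op L d (PA i) \<psi>))\<^sup>2)" for \<psi>
  proof -
    let ?a = "\<psi> - ?P \<psi>" and ?b = "?P (\<psi> - ?F \<psi>)"
    have "vec_eq L d (\<psi> - ?Fi \<psi>) (?a + ?b)"
      using ins[of \<psi>] by (simp add: vec_eq_def apply_op_diff)
    then have e: "vnorm L d (\<psi> - ?Fi \<psi>) = vnorm L d (?a + ?b)" by (rule vnorm_cong)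
    have o: "inner L d ?a ?b = 0"
    proof -
      have "inner L d ?a ?b = inner L d (?P ?a) (\<psi> - ?F \<psi>)" using hx by (simp add: herm_def)
      also have "\<dots> = inner L d (\<lambda>_. 0) (\<psi> - ?F \<psi>)"
        using ix by (intro inner_cong) (auto simp: apply_op_diff videm_def vec_eq_def)
      also have "\<dots> = 0" by (simp add: inner_def)
      finally show ?thesis .
    qed
    have s1: "(vnorm L d (\<psi> - ?Fi \<psi>))\<^sup>2 = (vnorm L d ?a)\<^sup>2 + (vnorm L d ?b)\<^sup>2"
      using e vnorm_add_orth[OF o] by simp
    have s2: "(vnorm L d ?b)\<^sup>2 \<le> (vnorm L d (\<psi> - ?F \<psi>))\<^sup>2"
      using proj_contr[OF hx ix] vnorm_nonneg by (simp add: power_mono)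
    have s3: "(vnorm L d (\<psi> - ?F \<psi>))\<^sup>2 \<le> (\<Sum>i\<in>T. (vnorm L d (\<psi> - apply_op L d (PA i) \<psi>))\<^sup>2)"
      by (rule IHn)
    have s4: "(\<Sum>i\<in>insert x T. (vnorm L d (\<psi> - apply_op L d (PA i) \<psi>))\<^sup>2)
        = (vnorm L d ?a)\<^sup>2 + (\<Sum>i\<in>T. (vnorm L d (\<psi> - apply_op L d (PA i) \<psi>))\<^sup>2)"
      using insert.hyps by simp
    show ?thesis using s1 s2 s3 s4 by linarith
  qed
  show ?case using comm herm idem nrm by blast
qed

end


context
  fixes L :: nat and d :: "site \<Rightarrow> nat"
begin

abbreviation RR :: "op \<Rightarrow> vec \<Rightarrow> vec" where
  "RR P x \<equiv> x - apply_op L d P x"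

lemma RR_herm: "herm L d P \<Longrightarrow> inner L d (RR P x) y = inner L d x (RR P y)"
  by (simp add: inner_diff_left inner_diff_right herm_def)

lemma RR_idem: "videm L d P \<Longrightarrow> vec_eq L d (RR P (RR P x)) (RR P x)"
  by (simp add: apply_op_diff videm_def vec_eq_def)

lemma RR_cong: "vec_eq L d x y \<Longrightarrow> vec_eq L d (RR P x) (RR P y)"
  by (simp add: vec_eq_def apply_op_cong[of L d x y])

lemma RR_comm: "vcomm L d X P \<Longrightarrow> vec_eq L d (apply_op L d X (RR P x)) (RR P (apply_op L d X x))"
  by (simp add: apply_op_diff vcomm_def vec_eq_def)

lemma RR_RR_comm: "vcomm L d P Q \<Longrightarrow> vec_eq L d (RR P (RR Q x)) (RR Q (RR P x))"
  by (simp add: apply_op_diff vcomm_def vec_eq_def)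

lemma RR_norm:
  assumes hP: "herm L d P" and iP: "videm L d P"
  shows "(vnorm L d (RR P u))\<^sup>2 = Re (inner L d u (RR P u))"
proof -
  have "inner L d (RR P u) (RR P u) = inner L d u (RR P (RR P u))" by (rule RR_herm[OF hP])
  also have "\<dots> = inner L d u (RR P u)" by (rule inner_cong[OF vec_eq_refl RR_idem[OF iP]])
  finally show ?thesis by (simp add: vnorm_sq)
qed

lemma Nbound:
  assumes fin: "finite I"
    and pG: "\<And>i. i \<in> I \<Longrightarrow> psd L d (G i)"
    and sG: "\<And>i. i \<in> I \<Longrightarrow> op_le L d (G i) (mmult L d (G i) (G i))"
    and hP: "\<And>i. i \<in> I \<Longrightarrow> herm L d (P i)" and iP: "\<And>i. i \<in> I \<Longrightarrow> videm L d (P i)"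
    and kP: "\<And>i \<psi>. i \<in> I \<Longrightarrow> vec_eq L d (apply_op L d (G i) \<psi>) (\<lambda>_. 0) \<longleftrightarrow> vec_eq L d (apply_op L d (P i) \<psi>) \<psi>"
    and cPP: "\<And>i j. i \<in> I \<Longrightarrow> j \<in> I \<Longrightarrow> vcomm L d (P i) (P j)"
    and cGP: "\<And>i j. i \<in> I \<Longrightarrow> j \<in> I \<Longrightarrow> vcomm L d (G j) (P i)"
  shows "(\<Sum>i\<in>I. \<Sum>j\<in>I. (vnorm L d (RR (P j) (RR (P i) \<psi>)))\<^sup>2)
         \<le> (vnorm L d (\<lambda>\<sigma>. \<Sum>i\<in>I. apply_op L d (G i) \<psi> \<sigma>))\<^sup>2"
proof -
  let ?R = "\<lambda>i x. RR (P i) x"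
  define a where "a = (\<lambda>\<sigma>. \<Sum>i\<in>I. ?R i \<psi> \<sigma>)"
  define h where "h = (\<lambda>\<sigma>. \<Sum>i\<in>I. apply_op L d (G i) \<psi> \<sigma>)"
  define b where "b = h - a"
  have key: "inner L d (?R i \<psi>) (?R j \<psi>) = inner L d (?R i \<psi>) (?R j (?R i \<psi>))" if i: "i \<in> I" and j: "j \<in> I" for i j
  proof -
    have "inner L d (?R i \<psi>) (?R j \<psi>) = inner L d (?R i (?R i \<psi>)) (?R j \<psi>)"
      by (rule inner_cong[OF vec_eq_sym[OF RR_idem[OF iP[OF i]]] vec_eq_refl])
    also have "\<dots> = inner L d (?R i \<psi>) (?R i (?R j \<psi>))" by (rule RR_herm[OF hP[OF i]])
    also have "\<dots> = inner L d (?R i \<psi>) (?R j (?R i \<psi>))"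
      by (rule inner_cong[OF vec_eq_refl RR_RR_comm[OF cPP[OF i j]]])
    finally show ?thesis .
  qed
  have nRR: "(vnorm L d (?R j (?R i \<psi>)))\<^sup>2 = Re (inner L d (?R i \<psi>) (?R j \<psi>))" if i: "i \<in> I" and j: "j \<in> I" for i j
    using RR_norm[OF hP[OF j] iP[OF j], of "?R i \<psi>"] key[OF i j] by simp
  have aa: "inner L d a a = (\<Sum>i\<in>I. \<Sum>j\<in>I. inner L d (?R i \<psi>) (?R j \<psi>))"
    unfolding a_def by (simp only: inner_sum_left inner_sum_right)
  have X: "(\<Sum>i\<in>I. \<Sum>j\<in>I. (vnorm L d (?R j (?R i \<psi>)))\<^sup>2) = (vnorm L d a)\<^sup>2"
    using nRR by (simp add: vnorm_sq aa)
  have ab: "0 \<le> Re (inner L d a b)"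
  proof -
    have t: "0 \<le> Re (inner L d (?R i \<psi>) (apply_op L d (G j) \<psi> - ?R j \<psi>))" if i: "i \<in> I" and j: "j \<in> I" for i j
    proof -
      let ?u = "?R i \<psi>"
      have "inner L d ?u (apply_op L d (G j) \<psi>) = inner L d (?R i ?u) (apply_op L d (G j) \<psi>)"
        by (rule inner_cong[OF vec_eq_sym[OF RR_idem[OF iP[OF i]]] vec_eq_refl])
      also have "\<dots> = inner L d ?u (?R i (apply_op L d (G j) \<psi>))" by (rule RR_herm[OF hP[OF i]])
      also have "\<dots> = inner L d ?u (apply_op L d (G j) ?u)"
        by (rule inner_cong[OF vec_eq_refl vec_eq_sym[OF RR_comm[OF cGP[OF i j]]]])
      finally have e1: "inner L d ?u (apply_op L d (G j) \<psi>) = inner L d ?u (apply_op L d (G j) ?u)" .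
      have g: "(vnorm L d (?R j ?u))\<^sup>2 \<le> Re (inner L d ?u (apply_op L d (G j) ?u))"
        by (rule gap[OF pG[OF j] sG[OF j] hP[OF j] iP[OF j] kP[OF j]])
      have "(vnorm L d (?R j ?u))\<^sup>2 = Re (inner L d ?u (?R j \<psi>))" by (rule nRR[OF i j])
      then show ?thesis using g e1 by (simp add: inner_diff_right)
    qed
    have "inner L d a b = (\<Sum>i\<in>I. \<Sum>j\<in>I. inner L d (?R i \<psi>) (apply_op L d (G j) \<psi> - ?R j \<psi>))"
    proof -
      have "b = (\<lambda>\<sigma>. \<Sum>j\<in>I. (apply_op L d (G j) \<psi> - ?R j \<psi>) \<sigma>)"
        by (simp add: b_def h_def a_def fun_eq_iff sum_subtractf)
      then show ?thesis unfolding a_def by (simp only: inner_sum_left inner_sum_right)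
    qed
    then show ?thesis using t by (simp add: sum_nonneg)
  qed
  have hab: "h = a + b" by (simp add: b_def)
  have "(vnorm L d h)\<^sup>2 = Re (inner L d (a + b) (a + b))" by (simp add: vnorm_sq hab)
  also have "\<dots> = (vnorm L d a)\<^sup>2 + (vnorm L d b)\<^sup>2 + 2 * Re (inner L d a b)"
    using inner_cnj[of L d b a] by (simp add: inner_add_left inner_add_right vnorm_sq)
  finally have "(vnorm L d a)\<^sup>2 \<le> (vnorm L d h)\<^sup>2" using ab by (simp add: zero_le_power2)
  then show ?thesis using X by (simp add: h_def)
qed

end


lemma sum_sym_swap:
  assumes sym: "\<And>a b. ov a b \<longleftrightarrow> ov b a"
  shows "(\<Sum>a\<in>S. \<Sum>b\<in>S. if ov a b then f b else (0::real)) = (\<Sum>a\<in>S. \<Sum>b\<in>S. if ov a b then f a else 0)"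
proof -
  have "(\<Sum>a\<in>S. \<Sum>b\<in>S. if ov a b then f b else (0::real)) = (\<Sum>b\<in>S. \<Sum>a\<in>S. if ov a b then f b else 0)"
    by (rule sum.swap)
  also have "\<dots> = (\<Sum>b\<in>S. \<Sum>a\<in>S. if ov b a then f b else 0)" using sym by simp
  finally show ?thesis .
qed

context
  fixes L :: nat and d :: "site \<Rightarrow> nat"
begin

lemma assembly:
  fixes Sq :: "'a set" and S2 :: "site set set"
    and W :: "'a \<Rightarrow> op" and PB :: "'a \<Rightarrow> op" and P :: "site set \<Rightarrow> op"
    and ov :: "'a \<Rightarrow> 'a \<Rightarrow> bool"
  assumes finSq: "finite Sq" and finS2: "finite S2"
    and w0: "0 \<le> w"
    and Wb: "\<And>A x. A \<in> Sq \<Longrightarrow> vnorm L d (apply_op L d (W A) x) \<le> w * vnorm L d x"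
    and WQ: "\<And>A x. A \<in> Sq \<Longrightarrow> vec_eq L d (apply_op L d (W A) (apply_op L d (PB A) x)) (\<lambda>_. 0)"
    and QW: "\<And>A x. A \<in> Sq \<Longrightarrow> vec_eq L d (apply_op L d (PB A) (apply_op L d (W A) x)) (\<lambda>_. 0)"
    and hB: "\<And>A. A \<in> Sq \<Longrightarrow> herm L d (PB A)"
    and cWB: "\<And>A A'. A \<in> Sq \<Longrightarrow> A' \<in> Sq \<Longrightarrow> \<not> ov A A' \<Longrightarrow> vcomm L d (W A) (PB A')"
    and sym: "\<And>A A'. ov A A' \<longleftrightarrow> ov A' A"
    and K1: "\<And>A. A \<in> Sq \<Longrightarrow> real (card {A'\<in>Sq. ov A A'}) \<le> K1"
    and SQ: "\<And>\<phi>. (\<Sum>A\<in>Sq. (vnorm L d (RR L d (PB A) \<phi>))\<^sup>2) \<le> K2 * (\<Sum>i\<in>S2. (vnorm L d (RR L d (P i) \<phi>))\<^sup>2)"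
    and K2: "0 \<le> K2" and K1pos: "0 \<le> K1"
    and iP: "\<And>i. i \<in> S2 \<Longrightarrow> videm L d (P i)"
    and cPB: "\<And>i A. i \<in> S2 \<Longrightarrow> A \<in> Sq \<Longrightarrow> vcomm L d (P i) (PB A)"
  shows "(vnorm L d (\<lambda>\<sigma>. \<Sum>A\<in>Sq. apply_op L d (W A) \<psi> \<sigma>))\<^sup>2
     \<le> w\<^sup>2 * (K1 * K2 + K2\<^sup>2) * (\<Sum>i\<in>S2. \<Sum>j\<in>S2. (vnorm L d (RR L d (P j) (RR L d (P i) \<psi>)))\<^sup>2)"
proof -
  let ?W = "\<lambda>A x. apply_op L d (W A) x"
  let ?Q = "\<lambda>A x. RR L d (PB A) x"
  let ?R = "\<lambda>i x. RR L d (P i) x"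
  define X where "X = (\<Sum>i\<in>S2. \<Sum>j\<in>S2. (vnorm L d (?R j (?R i \<psi>)))\<^sup>2)"
  define qa where "qa A = (vnorm L d (?Q A \<psi>))\<^sup>2" for A
  define qq where "qq A A' = (vnorm L d (?Q A (?Q A' \<psi>)))\<^sup>2" for A A'
  have WQx: "vec_eq L d (?W A x) (?W A (?Q A x))" if "A \<in> Sq" for A x
    using WQ[OF that, of x] by (simp add: apply_op_diff vec_eq_def)
  have QWx: "vec_eq L d (?Q A (?W A x)) (?W A x)" if "A \<in> Sq" for A x
    using QW[OF that, of x] by (simp add: vec_eq_def)
  have cWQ: "vec_eq L d (?W A (?Q A' x)) (?Q A' (?W A x))" if "A \<in> Sq" "A' \<in> Sq" "\<not> ov A A'" for A A' x
    by (rule RR_comm[OF cWB[OF that]])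
  have Wn: "vnorm L d (?W A x) \<le> w * vnorm L d (?Q A x)" if "A \<in> Sq" for A x
    using Wb[OF that, of "?Q A x"] vnorm_cong[OF WQx[OF that, of x]] by simp
  have bnd: "Re (inner L d (?W A \<psi>) (?W A' \<psi>))
      \<le> (if ov A A' then w\<^sup>2 * (qa A + qa A') / 2 else 0) + w\<^sup>2 * (qq A A' + qq A' A) / 2"
    if A: "A \<in> Sq" and A': "A' \<in> Sq" for A A'
  proof -
    have amgm: "x * y \<le> (x\<^sup>2 + y\<^sup>2) / 2" for x y :: real
      using sum_squares_ge_zero[of "x - y" 0] by (simp add: power2_eq_square algebra_simps)
    have qq0: "0 \<le> qq A A' + qq A' A" by (simp add: qq_def)
    have qa0: "0 \<le> qa A + qa A'" by (simp add: qa_def)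
    have Re_le: "Re z \<le> cmod z" for z by (rule complex_Re_le_cmod)
    show ?thesis
    proof (cases "ov A A'")
      case True
      have "Re (inner L d (?W A \<psi>) (?W A' \<psi>)) \<le> vnorm L d (?W A \<psi>) * vnorm L d (?W A' \<psi>)"
        using Re_le inner_CS order_trans by blast
      also have "\<dots> \<le> (w * vnorm L d (?Q A \<psi>)) * (w * vnorm L d (?Q A' \<psi>))"
        by (intro mult_mono Wn A A' vnorm_nonneg) (use w0 vnorm_nonneg in auto)
      also have "\<dots> = w\<^sup>2 * (vnorm L d (?Q A \<psi>) * vnorm L d (?Q A' \<psi>))" by (simp add: power2_eq_square)
      also have "\<dots> \<le> w\<^sup>2 * ((qa A + qa A') / 2)"
        unfolding qa_def by (intro mult_left_mono amgm) simp
      finally have c: "Re (inner L d (?W A \<psi>) (?W A' \<psi>)) \<le> w\<^sup>2 * ((qa A + qa A') / 2)" .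
      have nn: "0 \<le> w\<^sup>2 * (qq A A' + qq A' A) / 2" using qq0 by simp
      have ee: "w\<^sup>2 * (qa A + qa A') / 2 = w\<^sup>2 * ((qa A + qa A') / 2)" by simp
      show ?thesis using True c nn ee by (simp only: if_True)
    next
      case False
      have nov': "\<not> ov A' A" using False sym by blast
      have e: "inner L d (?W A \<psi>) (?W A' \<psi>) = inner L d (?W A (?Q A (?Q A' \<psi>))) (?W A' (?Q A' (?Q A \<psi>)))"
      proof -
        have "inner L d (?W A \<psi>) (?W A' \<psi>) = inner L d (?W A \<psi>) (?Q A' (?W A' \<psi>))"
          by (rule inner_cong[OF vec_eq_refl vec_eq_sym[OF QWx[OF A']]])
        also have "\<dots> = inner L d (?Q A' (?W A \<psi>)) (?W A' \<psi>)" by (rule RR_herm[OF hB[OF A'], symmetric])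
        also have "\<dots> = inner L d (?W A (?Q A' \<psi>)) (?W A' \<psi>)"
          by (rule inner_cong[OF vec_eq_sym[OF cWQ[OF A A' False]] vec_eq_refl])
        also have "\<dots> = inner L d (?Q A (?W A (?Q A' \<psi>))) (?W A' \<psi>)"
          by (rule inner_cong[OF vec_eq_sym[OF QWx[OF A]] vec_eq_refl])
        also have "\<dots> = inner L d (?W A (?Q A' \<psi>)) (?Q A (?W A' \<psi>))" by (rule RR_herm[OF hB[OF A]])
        also have "\<dots> = inner L d (?W A (?Q A' \<psi>)) (?W A' (?Q A \<psi>))"
          by (rule inner_cong[OF vec_eq_refl vec_eq_sym[OF cWQ[OF A' A nov']]])
        also have "\<dots> = inner L d (?W A (?Q A (?Q A' \<psi>))) (?W A' (?Q A' (?Q A \<psi>)))"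
          by (rule inner_cong[OF WQx[OF A] WQx[OF A']])
        finally show ?thesis .
      qed
      have "Re (inner L d (?W A \<psi>) (?W A' \<psi>)) \<le> vnorm L d (?W A (?Q A (?Q A' \<psi>))) * vnorm L d (?W A' (?Q A' (?Q A \<psi>)))"
        unfolding e using Re_le inner_CS order_trans by blast
      also have "\<dots> \<le> (w * vnorm L d (?Q A (?Q A' \<psi>))) * (w * vnorm L d (?Q A' (?Q A \<psi>)))"
        by (intro mult_mono Wb A A' vnorm_nonneg) (use w0 vnorm_nonneg in auto)
      also have "\<dots> = w\<^sup>2 * (vnorm L d (?Q A (?Q A' \<psi>)) * vnorm L d (?Q A' (?Q A \<psi>)))" by (simp add: power2_eq_square)
      also have "\<dots> \<le> w\<^sup>2 * ((qq A A' + qq A' A) / 2)"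
        unfolding qq_def by (intro mult_left_mono amgm) simp
      finally show ?thesis using False by simp
    qed
  qed
  have total: "(vnorm L d (\<lambda>\<sigma>. \<Sum>A\<in>Sq. ?W A \<psi> \<sigma>))\<^sup>2 = (\<Sum>A\<in>Sq. \<Sum>A'\<in>Sq. Re (inner L d (?W A \<psi>) (?W A' \<psi>)))"
    by (simp add: vnorm_sq inner_sum_left inner_sum_right)
  have s1: "(\<Sum>A\<in>Sq. \<Sum>A'\<in>Sq. Re (inner L d (?W A \<psi>) (?W A' \<psi>)))
     \<le> (\<Sum>A\<in>Sq. \<Sum>A'\<in>Sq. (if ov A A' then w\<^sup>2 * (qa A + qa A') / 2 else 0) + w\<^sup>2 * (qq A A' + qq A' A) / 2)"
    by (intro sum_mono bnd)
  have pt: "(if ov A A' then w\<^sup>2 * (qa A + qa A') / 2 else 0) + w\<^sup>2 * (qq A A' + qq A' A) / 2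
      = w\<^sup>2 / 2 * (if ov A A' then qa A else 0) + w\<^sup>2 / 2 * (if ov A A' then qa A' else 0)
        + w\<^sup>2 / 2 * qq A A' + w\<^sup>2 / 2 * qq A' A" for A A'
    by (cases "ov A A'") (simp_all add: algebra_simps add_divide_distrib)
  have split: "(\<Sum>A\<in>Sq. \<Sum>A'\<in>Sq. (if ov A A' then w\<^sup>2 * (qa A + qa A') / 2 else 0) + w\<^sup>2 * (qq A A' + qq A' A) / 2)
     = w\<^sup>2 / 2 * (\<Sum>A\<in>Sq. \<Sum>A'\<in>Sq. if ov A A' then qa A else 0) + w\<^sup>2 / 2 * (\<Sum>A\<in>Sq. \<Sum>A'\<in>Sq. if ov A A' then qa A' else 0)
       + w\<^sup>2 / 2 * (\<Sum>A\<in>Sq. \<Sum>A'\<in>Sq. qq A A') + w\<^sup>2 / 2 * (\<Sum>A\<in>Sq. \<Sum>A'\<in>Sq. qq A' A)"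
    by (simp only: pt sum.distrib sum_distrib_left)
  have sw1: "(\<Sum>A\<in>Sq. \<Sum>A'\<in>Sq. if ov A A' then qa A' else 0) = (\<Sum>A\<in>Sq. \<Sum>A'\<in>Sq. if ov A A' then qa A else 0)"
    by (rule sum_sym_swap[OF sym])
  have sw2: "(\<Sum>A\<in>Sq. \<Sum>A'\<in>Sq. qq A' A) = (\<Sum>A\<in>Sq. \<Sum>A'\<in>Sq. qq A A')"
    by (rule sum.swap)
  have ovb: "(\<Sum>A\<in>Sq. \<Sum>A'\<in>Sq. if ov A A' then qa A else 0) \<le> K1 * (\<Sum>A\<in>Sq. qa A)"
  proof -
    have "(\<Sum>A'\<in>Sq. if ov A A' then qa A else 0) = real (card {A'\<in>Sq. ov A A'}) * qa A" for A
      using finSq by (simp add: sum.If_cases Int_def)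
    then have "(\<Sum>A\<in>Sq. \<Sum>A'\<in>Sq. if ov A A' then qa A else 0) = (\<Sum>A\<in>Sq. real (card {A'\<in>Sq. ov A A'}) * qa A)"
      by simp
    also have "\<dots> \<le> (\<Sum>A\<in>Sq. K1 * qa A)"
      by (intro sum_mono mult_right_mono K1) (auto simp: qa_def)
    finally show ?thesis by (simp add: sum_distrib_left)
  qed
  have Rdiag: "(\<Sum>i\<in>S2. (vnorm L d (?R i \<psi>))\<^sup>2) \<le> X"
  proof -
    have "(vnorm L d (?R i \<psi>))\<^sup>2 \<le> (\<Sum>j\<in>S2. (vnorm L d (?R j (?R i \<psi>)))\<^sup>2)" if i: "i \<in> S2" for i
    proof -
      have "(vnorm L d (?R i \<psi>))\<^sup>2 = (vnorm L d (?R i (?R i \<psi>)))\<^sup>2"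
        using vnorm_cong[OF RR_idem[OF iP[OF i]]] by simp
      also have "\<dots> \<le> (\<Sum>j\<in>S2. (vnorm L d (?R j (?R i \<psi>)))\<^sup>2)"
        using finS2 i by (intro member_le_sum) auto
      finally show ?thesis .
    qed
    then show ?thesis unfolding X_def by (intro sum_mono) auto
  qed
  have qab: "(\<Sum>A\<in>Sq. qa A) \<le> K2 * X"
    using SQ[of \<psi>] Rdiag K2 unfolding qa_def by (meson mult_left_mono order_trans)
  have qqb: "(\<Sum>A\<in>Sq. \<Sum>A'\<in>Sq. qq A A') \<le> K2\<^sup>2 * X"
  proof -
    have "(\<Sum>A\<in>Sq. \<Sum>A'\<in>Sq. qq A A') = (\<Sum>A'\<in>Sq. \<Sum>A\<in>Sq. qq A A')" by (rule sum.swap)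
    also have "\<dots> \<le> (\<Sum>A'\<in>Sq. K2 * (\<Sum>i\<in>S2. (vnorm L d (?R i (?Q A' \<psi>)))\<^sup>2))"
      unfolding qq_def by (intro sum_mono SQ)
    also have "\<dots> = K2 * (\<Sum>i\<in>S2. \<Sum>A'\<in>Sq. (vnorm L d (?Q A' (?R i \<psi>)))\<^sup>2)"
    proof -
      have "(vnorm L d (?R i (?Q A' \<psi>))) = vnorm L d (?Q A' (?R i \<psi>))" if "i \<in> S2" "A' \<in> Sq" for i A'
        by (rule vnorm_cong[OF RR_RR_comm[OF cPB[OF that]]])
      then show ?thesis by (simp add: sum_distrib_left) (subst sum.swap, simp)
    qed
    also have "\<dots> \<le> K2 * (\<Sum>i\<in>S2. K2 * (\<Sum>j\<in>S2. (vnorm L d (?R j (?R i \<psi>)))\<^sup>2))"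
      by (intro mult_left_mono sum_mono SQ K2)
    also have "\<dots> = K2\<^sup>2 * X" by (simp add: X_def sum_distrib_left power2_eq_square mult.assoc)
    finally show ?thesis .
  qed
  have a: "(\<Sum>A\<in>Sq. \<Sum>A'\<in>Sq. if ov A A' then qa A else 0) \<le> K1 * (K2 * X)"
    using ovb qab K1pos by (meson mult_left_mono order_trans)
  have "(vnorm L d (\<lambda>\<sigma>. \<Sum>A\<in>Sq. ?W A \<psi> \<sigma>))\<^sup>2
      \<le> w\<^sup>2 / 2 * (2 * (\<Sum>A\<in>Sq. \<Sum>A'\<in>Sq. if ov A A' then qa A else 0)) + w\<^sup>2 / 2 * (2 * (\<Sum>A\<in>Sq. \<Sum>A'\<in>Sq. qq A A'))"
    using total s1 unfolding split sw1 sw2 by (simp add: algebra_simps)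
  also have "\<dots> \<le> w\<^sup>2 / 2 * (2 * (K1 * (K2 * X))) + w\<^sup>2 / 2 * (2 * (K2\<^sup>2 * X))"
    by (intro add_mono mult_left_mono a qqb) auto
  also have "\<dots> = w\<^sup>2 * (K1 * K2 + K2\<^sup>2) * X" by (simp add: algebra_simps)
  finally show ?thesis by (simp add: X_def)
qed

end


lemma sq_mod: "sq L (x mod int L) (y mod int L) r = sq L x y r"
  unfolding sq_def by (simp add: mod_add_left_eq)

lemma squares_rep_ex:
  assumes "A \<in> squares L r" "L \<ge> 1"
  shows "\<exists>p. 0 \<le> fst p \<and> fst p < int L \<and> 0 \<le> snd p \<and> snd p < int L \<and> A = sq L (fst p) (snd p) r"
proof -
  obtain x y where A: "A = sq L x y r" using assms(1) by (auto simp: squares_def)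
  show ?thesis
    by (rule exI[of _ "(x mod int L, y mod int L)"]) (use assms(2) A sq_mod in auto)
qed

definition rep :: "nat \<Rightarrow> nat \<Rightarrow> site set \<Rightarrow> int \<times> int" where
  "rep L r A = (SOME p. 0 \<le> fst p \<and> fst p < int L \<and> 0 \<le> snd p \<and> snd p < int L \<and> A = sq L (fst p) (snd p) r)"

definition Bof :: "nat \<Rightarrow> nat \<Rightarrow> site set \<Rightarrow> site set" where
  "Bof L r A = sq L (fst (rep L r A) - 1) (snd (rep L r A) - 1) (r + 2)"

lemma rep_props:
  assumes "A \<in> squares L r" "L \<ge> 1"
  shows "0 \<le> fst (rep L r A) \<and> fst (rep L r A) < int L \<and> 0 \<le> snd (rep L r A) \<and> snd (rep L r A) < int L
         \<and> A = sq L (fst (rep L r A)) (snd (rep L r A)) r"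
  unfolding rep_def using someI_ex[OF squares_rep_ex[OF assms]] .

lemma rep_inj: "L \<ge> 1 \<Longrightarrow> inj_on (rep L r) (squares L r)"
  by (rule inj_onI) (metis rep_props)

lemma sq_sites: "L \<ge> 1 \<Longrightarrow> sq L x y r \<subseteq> sites L"
proof
  fix p assume L: "L \<ge> 1" and "p \<in> sq L x y r"
  then obtain i j where p: "p = ((x + i) mod int L, (y + j) mod int L)" by (auto simp: sq_def)
  have "0 < int L" using L by simp
  then show "p \<in> sites L" unfolding p sites_def by (simp add: pos_mod_sign pos_mod_bound)
qed

lemma squares_sites: "L \<ge> 1 \<Longrightarrow> A \<in> squares L r \<Longrightarrow> A \<subseteq> sites L"
  unfolding squares_def using sq_sites by blast

lemma A_sub_Bof:
  assumes "A \<in> squares L r" "L \<ge> 1"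
  shows "A \<subseteq> Bof L r A"
proof
  fix p assume "p \<in> A"
  then have "p \<in> sq L (fst (rep L r A)) (snd (rep L r A)) r" using rep_props[OF assms] by simp
  then obtain i j where ij: "0 \<le> i" "i < int r" "0 \<le> j" "j < int r"
    "p = ((fst (rep L r A) + i) mod int L, (snd (rep L r A) + j) mod int L)"
    by (auto simp: sq_def)
  show "p \<in> Bof L r A"
    unfolding Bof_def sq_def
    by (rule CollectI, rule exI[of _ "i + 1"], rule exI[of _ "j + 1"]) (use ij in auto)
qed

lemma Bof_sites: "L \<ge> 1 \<Longrightarrow> Bof L r A \<subseteq> sites L"
  by (simp add: Bof_def sq_sites)

lemma squares_image: "L \<ge> 1 \<Longrightarrow> squares L r = (\<lambda>(x, y). sq L x y r) ` ({0..<int L} \<times> {0..<int L})"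
proof
  assume L: "L \<ge> 1"
  show "squares L r \<subseteq> (\<lambda>(x, y). sq L x y r) ` ({0..<int L} \<times> {0..<int L})"
  proof
    fix A assume A: "A \<in> squares L r"
    show "A \<in> (\<lambda>(x, y). sq L x y r) ` ({0..<int L} \<times> {0..<int L})"
      using rep_props[OF A L] by (intro image_eqI[of _ _ "rep L r A"]) (auto simp: split_def mem_Times_iff)
  qed
  show "(\<lambda>(x, y). sq L x y r) ` ({0..<int L} \<times> {0..<int L}) \<subseteq> squares L r"
    by (auto simp: squares_def)
qed

lemma finite_squares: "L \<ge> 1 \<Longrightarrow> finite (squares L r)"
  by (simp add: squares_image)

lemma squares_nonempty: "squares L r \<noteq> {}"
  by (auto simp: squares_def)

lemma card_box: "card ({0..<int n} \<times> {0..<int n}) = n\<^sup>2"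
  by (simp add: card_cartesian_product power2_eq_square)

lemma count_point:
  assumes L: "L \<ge> 1"
  shows "card {A \<in> squares L r. p \<in> Bof L r A} \<le> (r + 2)\<^sup>2"
proof -
  obtain a b where p: "p = (a, b)" by (cases p)
  let ?f = "\<lambda>(s::int, t::int). ((a + (1 - s)) mod int L, (b + (1 - t)) mod int L)"
  let ?K = "{0..<int (r + 2)} \<times> {0..<int (r + 2)}"
  have sub: "rep L r ` {A \<in> squares L r. p \<in> Bof L r A} \<subseteq> ?f ` ?K"
  proof
    fix z assume "z \<in> rep L r ` {A \<in> squares L r. p \<in> Bof L r A}"
    then obtain A where A: "A \<in> squares L r" "p \<in> Bof L r A" and z: "z = rep L r A" by blast
    note R = rep_props[OF A(1) L]
    obtain i j where ij: "0 \<le> i" "i < int (r + 2)" "0 \<le> j" "j < int (r + 2)"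
      "p = ((fst z - 1 + i) mod int L, (snd z - 1 + j) mod int L)"
      using A(2) by (auto simp: Bof_def sq_def z)
    have x: "(a + (1 - i)) mod int L = fst z"
    proof -
      have "a = (fst z - 1 + i) mod int L" using ij(5) p by simp
      then have "(a + (1 - i)) mod int L = ((fst z - 1 + i) mod int L + (1 - i)) mod int L" by (simp only:)
      also have "\<dots> = (fst z - 1 + i + (1 - i)) mod int L" by (rule mod_add_left_eq)
      also have "\<dots> = fst z mod int L" by simp
      also have "\<dots> = fst z" using R z by simp
      finally show ?thesis .
    qed
    have y: "(b + (1 - j)) mod int L = snd z"
    proof -
      have "b = (snd z - 1 + j) mod int L" using ij(5) p by simp
      then have "(b + (1 - j)) mod int L = ((snd z - 1 + j) mod int L + (1 - j)) mod int L" by (simp only:)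
      also have "\<dots> = (snd z - 1 + j + (1 - j)) mod int L" by (rule mod_add_left_eq)
      also have "\<dots> = snd z mod int L" by simp
      also have "\<dots> = snd z" using R z by simp
      finally show ?thesis .
    qed
    show "z \<in> ?f ` ?K"
      by (rule image_eqI[of _ _ "(i, j)"]) (use x y ij in \<open>auto simp: prod_eq_iff\<close>)
  qed
  have "card {A \<in> squares L r. p \<in> Bof L r A} = card (rep L r ` {A \<in> squares L r. p \<in> Bof L r A})"
    by (rule card_image[symmetric]) (rule inj_on_subset[OF rep_inj[OF L]], auto)
  also have "\<dots> \<le> card (?f ` ?K)" by (rule card_mono[OF _ sub]) simp
  also have "\<dots> \<le> card ?K" by (rule card_image_le) simp
  also have "\<dots> = (r + 2)\<^sup>2" by (rule card_box)
  finally show ?thesis .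
qed

lemma count_overlap:
  assumes L: "L \<ge> 1" and A: "A \<in> squares L r"
  shows "card {A' \<in> squares L r. Bof L r A \<inter> Bof L r A' \<noteq> {}} \<le> (2 * r + 3)\<^sup>2"
proof -
  obtain x y where xy: "rep L r A = (x, y)" by (cases "rep L r A")
  let ?g = "\<lambda>(k::int, l::int). ((x + k) mod int L, (y + l) mod int L)"
  let ?K = "{-(int r + 1)..int r + 1} \<times> {-(int r + 1)..int r + 1}"
  have sub: "rep L r ` {A' \<in> squares L r. Bof L r A \<inter> Bof L r A' \<noteq> {}} \<subseteq> ?g ` ?K"
  proof
    fix z assume "z \<in> rep L r ` {A' \<in> squares L r. Bof L r A \<inter> Bof L r A' \<noteq> {}}"
    then obtain A' where A': "A' \<in> squares L r" "Bof L r A \<inter> Bof L r A' \<noteq> {}" and z: "z = rep L r A'" by blast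
    note R = rep_props[OF A'(1) L]
    obtain p where p1: "p \<in> Bof L r A" and p2: "p \<in> Bof L r A'" using A'(2) by blast
    obtain i j where ij: "0 \<le> i" "i < int (r + 2)" "0 \<le> j" "j < int (r + 2)"
      "p = ((x - 1 + i) mod int L, (y - 1 + j) mod int L)"
      using p1 by (auto simp: Bof_def sq_def xy)
    obtain i' j' where ij': "0 \<le> i'" "i' < int (r + 2)" "0 \<le> j'" "j' < int (r + 2)"
      "p = ((fst z - 1 + i') mod int L, (snd z - 1 + j') mod int L)"
      using p2 by (auto simp: Bof_def sq_def z)
    have ex: "(x + (i - i')) mod int L = fst z"
    proof -
      have e: "(x - 1 + i) mod int L = (fst z - 1 + i') mod int L" using ij(5) ij'(5) by simp
      have "(x + (i - i')) mod int L = ((x - 1 + i) mod int L + (1 - i')) mod int L"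
        by (subst mod_add_left_eq) (simp add: algebra_simps)
      also have "\<dots> = ((fst z - 1 + i') mod int L + (1 - i')) mod int L" by (simp only: e)
      also have "\<dots> = fst z mod int L" by (simp add: mod_add_left_eq)
      also have "\<dots> = fst z" using R z by simp
      finally show ?thesis .
    qed
    have ey: "(y + (j - j')) mod int L = snd z"
    proof -
      have e: "(y - 1 + j) mod int L = (snd z - 1 + j') mod int L" using ij(5) ij'(5) by simp
      have "(y + (j - j')) mod int L = ((y - 1 + j) mod int L + (1 - j')) mod int L"
        by (subst mod_add_left_eq) (simp add: algebra_simps)
      also have "\<dots> = ((snd z - 1 + j') mod int L + (1 - j')) mod int L" by (simp only: e)
      also have "\<dots> = snd z mod int L" by (simp add: mod_add_left_eq)
      also have "\<dots> = snd z" using R z by simp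
      finally show ?thesis .
    qed
    show "z \<in> ?g ` ?K"
      by (rule image_eqI[of _ _ "(i - i', j - j')"]) (use ex ey ij ij' in \<open>auto simp: prod_eq_iff\<close>)
  qed
  have cK: "card ?K = (2 * r + 3)\<^sup>2"
  proof -
    have "card {-(int r + 1)..int r + 1} = 2 * r + 3" by simp
    then show ?thesis by (simp add: card_cartesian_product power2_eq_square)
  qed
  have "card {A' \<in> squares L r. Bof L r A \<inter> Bof L r A' \<noteq> {}} = card (rep L r ` {A' \<in> squares L r. Bof L r A \<inter> Bof L r A' \<noteq> {}})"
    by (rule card_image[symmetric]) (rule inj_on_subset[OF rep_inj[OF L]], auto)
  also have "\<dots> \<le> card (?g ` ?K)" by (rule card_mono[OF _ sub]) simp
  also have "\<dots> \<le> card ?K" by (rule card_image_le) simp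
  also have "\<dots> = (2 * r + 3)\<^sup>2" by (rule cK)
  finally show ?thesis .
qed

lemma count_contained:
  assumes L: "L \<ge> 1" and i: "i \<in> squares L 2"
  shows "card {A \<in> squares L r. i \<subseteq> Bof L r A} \<le> (r + 2)\<^sup>2"
proof -
  obtain a b where i': "i = sq L a b 2" using i by (auto simp: squares_def)
  have p: "(a mod int L, b mod int L) \<in> i" unfolding i' sq_def
    by (rule CollectI, rule exI[of _ 0], rule exI[of _ 0]) simp
  have "card {A \<in> squares L r. i \<subseteq> Bof L r A} \<le> card {A \<in> squares L r. (a mod int L, b mod int L) \<in> Bof L r A}"
    by (rule card_mono) (use finite_squares[OF L] p in auto)
  also have "\<dots> \<le> (r + 2)\<^sup>2" by (rule count_point[OF L])
  finally show ?thesis .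
qed


lemma vnorm_scale: "vnorm L d (\<lambda>\<sigma>. c * x \<sigma>) = cmod c * vnorm L d x"
proof -
  have "(vnorm L d (\<lambda>\<sigma>. c * x \<sigma>))\<^sup>2 = ((cmod c) * vnorm L d x)\<^sup>2"
    by (simp add: vnorm_def sum_nonneg norm_mult power_mult_distrib sum_distrib_left)
  then show ?thesis using vnorm_nonneg[of L d] by (simp add: power2_eq_iff_nonneg)
qed

lemma apply_op_bound:
  "vnorm L d (apply_op L d M x) \<le> sqrt (\<Sum>\<sigma>\<in>cfgs L d. \<Sum>\<tau>\<in>cfgs L d. (cmod (M \<sigma> \<tau>))\<^sup>2) * vnorm L d x"
proof -
  let ?C = "cfgs L d"
  have row: "(cmod (apply_op L d M x \<sigma>))\<^sup>2 \<le> (\<Sum>\<tau>\<in>?C. (cmod (M \<sigma> \<tau>))\<^sup>2) * (vnorm L d x)\<^sup>2" for \<sigma>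
  proof -
    have "cmod (apply_op L d M x \<sigma>) \<le> (\<Sum>\<tau>\<in>?C. \<bar>cmod (M \<sigma> \<tau>)\<bar> * \<bar>cmod (x \<tau>)\<bar>)"
      unfolding apply_op_def by (rule order_trans[OF norm_sum]) (simp add: norm_mult)
    also have "\<dots> \<le> L2_set (\<lambda>\<tau>. cmod (M \<sigma> \<tau>)) ?C * L2_set (\<lambda>\<tau>. cmod (x \<tau>)) ?C"
      by (rule L2_set_mult_ineq)
    finally have "cmod (apply_op L d M x \<sigma>) \<le> L2_set (\<lambda>\<tau>. cmod (M \<sigma> \<tau>)) ?C * vnorm L d x"
      by (simp add: vnorm_L2)
    then have "(cmod (apply_op L d M x \<sigma>))\<^sup>2 \<le> (L2_set (\<lambda>\<tau>. cmod (M \<sigma> \<tau>)) ?C * vnorm L d x)\<^sup>2"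
      by (simp add: power_mono)
    also have "\<dots> = (\<Sum>\<tau>\<in>?C. (cmod (M \<sigma> \<tau>))\<^sup>2) * (vnorm L d x)\<^sup>2"
      by (simp add: L2_set_def power_mult_distrib sum_nonneg)
    finally show ?thesis .
  qed
  have "(vnorm L d (apply_op L d M x))\<^sup>2 = (\<Sum>\<sigma>\<in>?C. (cmod (apply_op L d M x \<sigma>))\<^sup>2)"
    by (simp add: vnorm_def sum_nonneg)
  also have "\<dots> \<le> (\<Sum>\<sigma>\<in>?C. (\<Sum>\<tau>\<in>?C. (cmod (M \<sigma> \<tau>))\<^sup>2) * (vnorm L d x)\<^sup>2)"
    by (intro sum_mono row)
  also have "\<dots> = (sqrt (\<Sum>\<sigma>\<in>?C. \<Sum>\<tau>\<in>?C. (cmod (M \<sigma> \<tau>))\<^sup>2) * vnorm L d x)\<^sup>2"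
    by (simp add: power_mult_distrib sum_nonneg sum_distrib_right)
  finally show ?thesis
    by (rule power2_le_imp_le) (simp add: vnorm_nonneg sum_nonneg)
qed

lemma opnorm_bound:
  "vnorm L d (apply_op L d M x) \<le> opnorm L d M * vnorm L d x \<and> 0 \<le> opnorm L d M"
proof -
  let ?S = "{vnorm L d (apply_op L d M \<psi>) | \<psi>. vnorm L d \<psi> \<le> 1}"
  let ?K = "sqrt (\<Sum>\<sigma>\<in>cfgs L d. \<Sum>\<tau>\<in>cfgs L d. (cmod (M \<sigma> \<tau>))\<^sup>2)"
  have K0: "0 \<le> ?K" by (simp add: sum_nonneg)
  have bdd: "bdd_above ?S"
  proof (rule bdd_aboveI)
    fix z assume "z \<in> ?S"
    then obtain \<psi> where z: "z = vnorm L d (apply_op L d M \<psi>)" and p: "vnorm L d \<psi> \<le> 1" by blast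
    have "z \<le> ?K * vnorm L d \<psi>" using z apply_op_bound by metis
    also have "\<dots> \<le> ?K * 1" using K0 p by (intro mult_left_mono) auto
    finally show "z \<le> ?K" by simp
  qed
  have zin: "0 \<in> ?S"
  proof -
    have "vnorm L d (apply_op L d M (\<lambda>_. 0)) = 0" by (simp add: apply_op_zero vnorm_def)
    moreover have "vnorm L d (\<lambda>_. 0) \<le> 1" by (simp add: vnorm_def)
    ultimately show ?thesis by force
  qed
  have on0: "0 \<le> opnorm L d M" unfolding opnorm_def using cSup_upper[OF zin bdd] .
  have "vnorm L d (apply_op L d M x) \<le> opnorm L d M * vnorm L d x"
  proof (cases "vnorm L d x = 0")
    case True
    then have "vec_eq L d x (\<lambda>_. 0)" by (simp add: vnorm_zero_iff)
    then have "apply_op L d M x = apply_op L d M (\<lambda>_. 0)" by (rule apply_op_cong)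
    then have "vnorm L d (apply_op L d M x) = 0" by (simp add: apply_op_zero vnorm_def)
    then show ?thesis using True by simp
  next
    case False
    define n where "n = vnorm L d x"
    have n: "n > 0" using False vnorm_nonneg[of L d x] by (simp add: n_def)
    define y where "y = (\<lambda>\<sigma>. complex_of_real (1 / n) * x \<sigma>)"
    have cm: "cmod (complex_of_real (1 / n)) = 1 / n" using n by (simp only: norm_of_real) simp
    then have ny: "vnorm L d y = 1" unfolding y_def vnorm_scale using n by (simp add: n_def)
    have "vnorm L d (apply_op L d M y) \<in> ?S" using ny by force
    then have le: "vnorm L d (apply_op L d M y) \<le> opnorm L d M"
      unfolding opnorm_def by (rule cSup_upper[OF _ bdd])
    have eq: "apply_op L d M y = (\<lambda>\<sigma>. complex_of_real (1 / n) * apply_op L d M x \<sigma>)"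
      unfolding y_def by (rule apply_op_scale)
    have "vnorm L d (apply_op L d M y) = cmod (complex_of_real (1 / n)) * vnorm L d (apply_op L d M x)"
      unfolding eq by (rule vnorm_scale)
    then have "vnorm L d (apply_op L d M y) = vnorm L d (apply_op L d M x) / n"
      unfolding cm by simp
    then show ?thesis using le n by (simp add: n_def divide_le_eq mult.commute)
  qed
  then show ?thesis using on0 by simp
qed

lemma H0_apply: "apply_op L d (H0 L G) \<psi> = (\<lambda>\<sigma>. \<Sum>A\<in>squares L 2. apply_op L d (G A) \<psi> \<sigma>)"
  unfolding apply_op_def H0_def sum_distrib_right by (rule ext) (rule sum.swap)

lemma orth_proj_facts:
  assumes "is_orth_proj L d M V"
  shows "herm L d M" "videm L d M" "\<And>\<psi>. \<psi> \<in> V \<longleftrightarrow> vec_eq L d (apply_op L d M \<psi>) \<psi>"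
    "op_eq L d M (adjoint M)"
  using assms by (auto simp: is_orth_proj_def intro: herm_op_eq videm_op_eq)

lemma Pblock_pfold: "Pblock L d PA B = pfold L d PA {A \<in> squares L 2. A \<subseteq> B}"
  by (simp add: Pblock_def pfold_def)


theorem lemma3:
  fixes D :: nat and c0 :: real
  assumes "c0 > 0"
  shows "\<exists>c::real. \<forall>(L::nat) (Lstar::nat) (d::site \<Rightarrow> nat) (G::site set \<Rightarrow> op)
            (PA::site set \<Rightarrow> op) (P::op) (q::nat) (WA::site set \<Rightarrow> op) (\<psi>::vec).
     L \<ge> 1 \<and> (\<forall>u\<in>sites L. 1 \<le> d u \<and> d u \<le> D) \<and> real Lstar \<ge> c0 * real L \<and>
     hamiltonian_ok L d G PA P \<and> TQO1 L d Lstar P \<and> TQO2 L d Lstar PA P \<and>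
     1 \<le> q \<and> q \<le> Lstar \<and>
     (\<forall>A\<in>squares L q. acts_on L d A (WA A) \<and> commute L d (WA A) P \<and>
                      op_eq L d (mmult L d (WA A) P) (\<lambda>_ _. 0))
     \<longrightarrow>
     vnorm L d (\<lambda>\<sigma>. \<Sum>A\<in>squares L q. apply_op L d (WA A) \<psi> \<sigma>)
       \<le> c * Max ((\<lambda>A. opnorm L d (WA A)) ` squares L q) * (real q)\<^sup>2
           * vnorm L d (apply_op L d (H0 L G) \<psi>)"
proof (intro exI[of _ 18] allI impI)
  fix L Lstar :: nat and d :: "site \<Rightarrow> nat" and G PA :: "site set \<Rightarrow> op" and P :: op
    and q :: nat and WA :: "site set \<Rightarrow> op" and \<psi> :: vec
  assume H: "L \<ge> 1 \<and> (\<forall>u\<in>sites L. 1 \<le> d u \<and> d u \<le> D) \<and> real Lstar \<ge> c0 * real L \<and>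
     hamiltonian_ok L d G PA P \<and> TQO1 L d Lstar P \<and> TQO2 L d Lstar PA P \<and>
     1 \<le> q \<and> q \<le> Lstar \<and>
     (\<forall>A\<in>squares L q. acts_on L d A (WA A) \<and> commute L d (WA A) P \<and>
                      op_eq L d (mmult L d (WA A) P) (\<lambda>_ _. 0))"
  have L1: "L \<ge> 1" using H by blast
  have d1: "\<And>u. u \<in> sites L \<Longrightarrow> 1 \<le> d u" using H by blast
  have ham: "hamiltonian_ok L d G PA P" using H by blast
  have tqo2: "TQO2 L d Lstar PA P" using H by blast
  have q1: "1 \<le> q" and qL: "q \<le> Lstar" using H by blast+
  have WH: "\<And>A. A \<in> squares L q \<Longrightarrow> acts_on L d A (WA A) \<and> commute L d (WA A) P \<and>
                      op_eq L d (mmult L d (WA A) P) (\<lambda>_ _. 0)" using H by blast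
  let ?S2 = "squares L 2" and ?Sq = "squares L q"
  have finS2: "finite ?S2" and finSq: "finite ?Sq" using finite_squares[OF L1] by blast+
  have hG: "\<And>i. i \<in> ?S2 \<Longrightarrow> acts_on L d i (G i) \<and> psd L d (G i) \<and>
         op_le L d (G i) (mmult L d (G i) (G i)) \<and> is_orth_proj L d (PA i) (kernel L d (G i))"
    using ham by (simp add: hamiltonian_ok_def)
  have cGG: "\<And>i j. i \<in> ?S2 \<Longrightarrow> j \<in> ?S2 \<Longrightarrow> commute L d (G i) (G j)"
    using ham by (simp add: hamiltonian_ok_def)
  have Pproj: "is_orth_proj L d P (ground L d G)" using ham by (simp add: hamiltonian_ok_def)
  have hP: "herm L d P" and iP: "videm L d P" and PadjP: "op_eq L d P (adjoint P)"
    using orth_proj_facts[OF Pproj] by blast+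
  have actG: "\<And>i. i \<in> ?S2 \<Longrightarrow> acts_on L d i (G i)" using hG by blast
  have pG: "\<And>i. i \<in> ?S2 \<Longrightarrow> psd L d (G i)" using hG by blast
  have sG: "\<And>i. i \<in> ?S2 \<Longrightarrow> op_le L d (G i) (mmult L d (G i) (G i))" using hG by blast
  have hPi: "\<And>i. i \<in> ?S2 \<Longrightarrow> herm L d (PA i)" using hG orth_proj_facts by blast
  have iPi: "\<And>i. i \<in> ?S2 \<Longrightarrow> videm L d (PA i)" using hG orth_proj_facts by blast
  have kPi: "\<And>i \<psi>. i \<in> ?S2 \<Longrightarrow> vec_eq L d (apply_op L d (G i) \<psi>) (\<lambda>_. 0) \<longleftrightarrow> vec_eq L d (apply_op L d (PA i) \<psi>) \<psi>"
  proof -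
    fix i \<psi> assume i: "i \<in> ?S2"
    have "\<psi> \<in> kernel L d (G i) \<longleftrightarrow> vec_eq L d (apply_op L d (PA i) \<psi>) \<psi>"
      using orth_proj_facts(3)[of L d "PA i" "kernel L d (G i)" \<psi>] hG[OF i] by blast
    then show "vec_eq L d (apply_op L d (G i) \<psi>) (\<lambda>_. 0) \<longleftrightarrow> vec_eq L d (apply_op L d (PA i) \<psi>) \<psi>"
      by (simp add: kernel_def)
  qed
  have hGi: "\<And>i. i \<in> ?S2 \<Longrightarrow> herm L d (G i)" using pG psd_herm by blast
  have cGPi: "\<And>i j. i \<in> ?S2 \<Longrightarrow> j \<in> ?S2 \<Longrightarrow> vcomm L d (G j) (PA i)"
  proof -
    fix i j assume i: "i \<in> ?S2" and j: "j \<in> ?S2"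
    show "vcomm L d (G j) (PA i)"
      by (rule comm_kernel_proj[OF hGi[OF i] hPi[OF i] iPi[OF i] kPi[OF i]])
        (rule vcomm_commute[OF cGG[OF j i]])
  qed
  have cPP: "\<And>i j. i \<in> ?S2 \<Longrightarrow> j \<in> ?S2 \<Longrightarrow> vcomm L d (PA i) (PA j)"
  proof -
    fix i j assume i: "i \<in> ?S2" and j: "j \<in> ?S2"
    show "vcomm L d (PA i) (PA j)"
      by (rule comm_kernel_proj[OF hGi[OF j] hPi[OF j] iPi[OF j] kPi[OF j]])
        (rule vcomm_sym[OF cGPi[OF i j]])
  qed
  define T where "T A = {i \<in> ?S2. i \<subseteq> Bof L q A}" for A
  define PB where "PB A = pfold L d PA (T A)" for A
  have finT: "finite (T A)" for A using finS2 by (simp add: T_def)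
  have TS: "T A \<subseteq> ?S2" for A by (auto simp: T_def)
  have PF: "(\<forall>X. (\<forall>i\<in>T A. vcomm L d X (PA i)) \<longrightarrow> vcomm L d X (pfold L d PA (T A)))
        \<and> herm L d (pfold L d PA (T A)) \<and> videm L d (pfold L d PA (T A))
        \<and> (\<forall>\<phi>. (vnorm L d (\<phi> - apply_op L d (pfold L d PA (T A)) \<phi>))\<^sup>2 \<le> (\<Sum>i\<in>T A. (vnorm L d (\<phi> - apply_op L d (PA i) \<phi>))\<^sup>2))" for A
    by (rule pfold_props[where S="squares L 2", OF cPP hPi iPi finT TS])
  have cPB_X: "\<And>X A. (\<forall>i\<in>T A. vcomm L d X (PA i)) \<Longrightarrow> vcomm L d X (PB A)"
    using PF unfolding PB_def by blast
  have hB: "\<And>A. herm L d (PB A)" using PF unfolding PB_def by blast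
  have iB: "\<And>A. videm L d (PB A)" using PF unfolding PB_def by blast
  have nB: "\<And>A \<phi>. (vnorm L d (\<phi> - apply_op L d (PB A) \<phi>))\<^sup>2 \<le> (\<Sum>i\<in>T A. (vnorm L d (\<phi> - apply_op L d (PA i) \<phi>))\<^sup>2)"
    using PF unfolding PB_def by blast
  have PB_Pblock: "PB A = Pblock L d PA (Bof L q A)" for A
    by (simp add: PB_def T_def Pblock_pfold)
  have AS: "\<And>A. A \<in> ?Sq \<Longrightarrow> A \<subseteq> sites L" using squares_sites[OF L1] by blast
  have vWP: "vcomm L d (WA A) P" if A: "A \<in> ?Sq" for A using WH[OF A] vcomm_commute by blast
  have WP0: "vec_eq L d (apply_op L d (WA A) (apply_op L d P x)) (\<lambda>_. 0)" if A: "A \<in> ?Sq" for A x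
  proof -
    have "op_eq L d (mmult L d (WA A) P) (\<lambda>_ _. 0)" using WH[OF A] by blast
    then have "vec_eq L d (apply_op L d (mmult L d (WA A) P) x) (apply_op L d (\<lambda>_ _. 0) x)"
      by (rule apply_op_op_eq)
    then show ?thesis using apply_op_mmult_vec[of L d "WA A" P x]
      by (auto simp: vec_eq_def apply_op_def)
  qed
  have ker: "rkernel d A (ptrace L d A P) \<subseteq> rkernel d A (ptrace L d A (PB A))" if A: "A \<in> ?Sq" for A
  proof -
    note R = rep_props[OF A L1]
    let ?x = "fst (rep L q A)" and ?y = "snd (rep L q A)"
    have eqA: "A = sq L ?x ?y q" using R by blast
    have "rkernel d (sq L ?x ?y q) (ptrace L d (sq L ?x ?y q) P) =
        rkernel d (sq L ?x ?y q) (ptrace L d (sq L ?x ?y q) (Pblock L d PA (sq L (?x - 1) (?y - 1) (q + 2))))"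
      using tqo2 q1 qL unfolding TQO2_def by blast
    then have "rkernel d A (ptrace L d A P) = rkernel d A (ptrace L d A (Pblock L d PA (Bof L q A)))"
      using eqA by (simp add: Bof_def)
    then show ?thesis by (simp add: PB_Pblock)
  qed
  have WQ: "vec_eq L d (apply_op L d (WA A) (apply_op L d (PB A) x)) (\<lambda>_. 0)" if A: "A \<in> ?Sq" for A x
    by (rule lemma2[OF AS[OF A] d1 _ PadjP _ ker[OF A] hB iB]) (use WH[OF A] in blast)+
  have QW: "vec_eq L d (apply_op L d (PB A) (apply_op L d (WA A) x)) (\<lambda>_. 0)" if A: "A \<in> ?Sq" for A x
  proof -
    have actA: "acts_on L d A (adjoint (WA A))" using WH[OF A] acts_on_adjoint by blast
    have adjP: "op_eq L d (mmult L d (adjoint (WA A)) P) (\<lambda>_ _. 0)"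
    proof (rule op_eqI_vec)
      fix y
      have "vec_eq L d (apply_op L d (adjoint (WA A)) (apply_op L d P y)) (\<lambda>_. 0)"
      proof (rule vec_eq_inner)
        fix \<phi>
        have "inner L d \<phi> (apply_op L d (adjoint (WA A)) (apply_op L d P y)) = inner L d (apply_op L d (WA A) \<phi>) (apply_op L d P y)"
          by (rule inner_adjoint2)
        also have "\<dots> = inner L d (apply_op L d P (apply_op L d (WA A) \<phi>)) y" using hP by (simp add: herm_def)
        also have "\<dots> = inner L d (apply_op L d (WA A) (apply_op L d P \<phi>)) y"
          using vWP[OF A] by (intro inner_cong) (auto simp: vcomm_def vec_eq_def)
        also have "\<dots> = inner L d (\<lambda>_. 0) y" by (rule inner_cong[OF WP0[OF A] vec_eq_refl])
        finally show "inner L d \<phi> (apply_op L d (adjoint (WA A)) (apply_op L d P y)) = inner L d \<phi> (\<lambda>_. 0)"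
          by (simp add: inner_def)
      qed
      then show "vec_eq L d (apply_op L d (mmult L d (adjoint (WA A)) P) y) (apply_op L d (\<lambda>_ _. 0) y)"
        using apply_op_mmult_vec[of L d "adjoint (WA A)" P y] by (auto simp: vec_eq_def apply_op_def)
    qed
    have z: "vec_eq L d (apply_op L d (adjoint (WA A)) (apply_op L d (PB A) y)) (\<lambda>_. 0)" for y
      by (rule lemma2[OF AS[OF A] d1 actA PadjP adjP ker[OF A] hB iB])
    show ?thesis
    proof (rule vec_eq_inner)
      fix \<phi>
      have "inner L d \<phi> (apply_op L d (PB A) (apply_op L d (WA A) x)) = inner L d (apply_op L d (PB A) \<phi>) (apply_op L d (WA A) x)"
        using hB by (simp add: herm_def)
      also have "\<dots> = inner L d (apply_op L d (adjoint (WA A)) (apply_op L d (PB A) \<phi>)) x" by (rule inner_adjoint)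
      also have "\<dots> = inner L d (\<lambda>_. 0) x" by (rule inner_cong[OF z vec_eq_refl])
      finally show "inner L d \<phi> (apply_op L d (PB A) (apply_op L d (WA A) x)) = inner L d \<phi> (\<lambda>_. 0)"
        by (simp add: inner_def)
    qed
  qed
  define ov where "ov A A' \<longleftrightarrow> Bof L q A \<inter> Bof L q A' \<noteq> {}" for A A'
  have cWB: "vcomm L d (WA A) (PB A')" if A: "A \<in> ?Sq" and A': "A' \<in> ?Sq" and nov: "\<not> ov A A'" for A A'
  proof (rule cPB_X, intro ballI)
    fix i assume i: "i \<in> T A'"
    have iS: "i \<in> ?S2" and iB: "i \<subseteq> Bof L q A'" using i by (auto simp: T_def)
    have "A \<inter> i = {}" using A_sub_Bof[OF A L1] iB nov by (auto simp: ov_def)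
    then have "commute L d (WA A) (G i)"
      using disjoint_commute[of L d A "WA A" i "G i"] WH[OF A] actG[OF iS] AS[OF A] squares_sites[OF L1 iS] by blast
    then show "vcomm L d (WA A) (PA i)"
      by (intro comm_kernel_proj[OF hGi[OF iS] hPi[OF iS] iPi[OF iS] kPi[OF iS]] vcomm_commute)
  qed
  have sym: "\<And>A A'. ov A A' \<longleftrightarrow> ov A' A" by (auto simp: ov_def)
  have K1: "real (card {A' \<in> ?Sq. ov A A'}) \<le> real ((2 * q + 3)\<^sup>2)" if A: "A \<in> ?Sq" for A
    unfolding ov_def by (rule of_nat_mono[OF count_overlap[OF L1 A]])
  have SQ: "(\<Sum>A\<in>?Sq. (vnorm L d (\<phi> - apply_op L d (PB A) \<phi>))\<^sup>2)
      \<le> real ((q + 2)\<^sup>2) * (\<Sum>i\<in>?S2. (vnorm L d (\<phi> - apply_op L d (PA i) \<phi>))\<^sup>2)" for \<phi>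
  proof -
    let ?f = "\<lambda>i. (vnorm L d (\<phi> - apply_op L d (PA i) \<phi>))\<^sup>2"
    have "(\<Sum>A\<in>?Sq. (vnorm L d (\<phi> - apply_op L d (PB A) \<phi>))\<^sup>2) \<le> (\<Sum>A\<in>?Sq. \<Sum>i\<in>T A. ?f i)"
      by (intro sum_mono nB)
    also have "\<dots> = (\<Sum>A\<in>?Sq. \<Sum>i\<in>?S2. if i \<subseteq> Bof L q A then ?f i else 0)"
      unfolding T_def using finS2 by (simp add: sum.inter_filter)
    also have "\<dots> = (\<Sum>i\<in>?S2. \<Sum>A\<in>?Sq. if i \<subseteq> Bof L q A then ?f i else 0)" by (rule sum.swap)
    also have "\<dots> = (\<Sum>i\<in>?S2. real (card {A \<in> ?Sq. i \<subseteq> Bof L q A}) * ?f i)"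
      using finSq by (simp add: sum.inter_filter[symmetric])
    also have "\<dots> \<le> (\<Sum>i\<in>?S2. real ((q + 2)\<^sup>2) * ?f i)"
    proof (rule sum_mono, rule mult_right_mono)
      fix i assume i: "i \<in> ?S2"
      show "real (card {A \<in> ?Sq. i \<subseteq> Bof L q A}) \<le> real ((q + 2)\<^sup>2)"
        using count_contained[OF L1 i, of q] by linarith
    qed simp
    also have "\<dots> = real ((q + 2)\<^sup>2) * (\<Sum>i\<in>?S2. ?f i)" by (simp add: sum_distrib_left)
    finally show ?thesis .
  qed
  define w where "w = Max ((\<lambda>A. opnorm L d (WA A)) ` ?Sq)"
  have wge: "opnorm L d (WA A) \<le> w" if "A \<in> ?Sq" for A
    unfolding w_def using finSq that by (intro Max_ge) auto
  obtain A0 where A0: "A0 \<in> ?Sq" using squares_nonempty by blast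
  have "0 \<le> opnorm L d (WA A0)" using opnorm_bound[of L d "WA A0"] by blast
  then have w0: "0 \<le> w" using wge[OF A0] by linarith
  have Wb: "vnorm L d (apply_op L d (WA A) x) \<le> w * vnorm L d x" if A: "A \<in> ?Sq" for A x
  proof -
    have "vnorm L d (apply_op L d (WA A) x) \<le> opnorm L d (WA A) * vnorm L d x" using opnorm_bound by blast
    also have "\<dots> \<le> w * vnorm L d x" by (intro mult_right_mono wge A vnorm_nonneg)
    finally show ?thesis .
  qed
  have cPBi: "vcomm L d (PA i) (PB A)" if i: "i \<in> ?S2" for i A
    by (rule cPB_X) (use cPP i TS in blast)
  have asm: "(vnorm L d (\<lambda>\<sigma>. \<Sum>A\<in>?Sq. apply_op L d (WA A) \<psi> \<sigma>))\<^sup>2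
     \<le> w\<^sup>2 * (real ((2 * q + 3)\<^sup>2) * real ((q + 2)\<^sup>2) + (real ((q + 2)\<^sup>2))\<^sup>2)
       * (\<Sum>i\<in>?S2. \<Sum>j\<in>?S2. (vnorm L d (RR L d (PA j) (RR L d (PA i) \<psi>)))\<^sup>2)"
    by (rule assembly[OF finSq finS2 w0 Wb WQ QW hB cWB sym K1 SQ _ _ iPi cPBi]) simp_all
  have Nb: "(\<Sum>i\<in>?S2. \<Sum>j\<in>?S2. (vnorm L d (RR L d (PA j) (RR L d (PA i) \<psi>)))\<^sup>2)
      \<le> (vnorm L d (apply_op L d (H0 L G) \<psi>))\<^sup>2"
    unfolding H0_apply by (rule Nbound[OF finS2 pG sG hPi iPi kPi cPP cGPi])
  have qq: "real ((2 * q + 3)\<^sup>2) * real ((q + 2)\<^sup>2) + (real ((q + 2)\<^sup>2))\<^sup>2 \<le> (18 * (real q)\<^sup>2)\<^sup>2"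
  proof -
    have a: "real (2 * q + 3) \<le> 5 * real q" and b: "real (q + 2) \<le> 3 * real q" using q1 by simp_all
    have a2: "real ((2 * q + 3)\<^sup>2) \<le> 25 * (real q)\<^sup>2"
      using power_mono[OF a, of 2] by (simp add: power_mult_distrib)
    have b2: "real ((q + 2)\<^sup>2) \<le> 9 * (real q)\<^sup>2"
      using power_mono[OF b, of 2] by (simp add: power_mult_distrib)
    have "real ((2 * q + 3)\<^sup>2) * real ((q + 2)\<^sup>2) \<le> (25 * (real q)\<^sup>2) * (9 * (real q)\<^sup>2)"
      by (intro mult_mono a2 b2) auto
    moreover have "(real ((q + 2)\<^sup>2))\<^sup>2 \<le> (9 * (real q)\<^sup>2)\<^sup>2"
      by (intro power_mono b2) simp
    ultimately have s: "real ((2 * q + 3)\<^sup>2) * real ((q + 2)\<^sup>2) + (real ((q + 2)\<^sup>2))\<^sup>2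
        \<le> (25 * (real q)\<^sup>2) * (9 * (real q)\<^sup>2) + (9 * (real q)\<^sup>2)\<^sup>2" by (rule add_mono)
    define t where "t = (real q)\<^sup>2"
    have e1: "(25 * t) * (9 * t) + (9 * t)\<^sup>2 = 306 * t\<^sup>2" by (simp add: power2_eq_square)
    have e2: "(18 * t)\<^sup>2 = 324 * t\<^sup>2" by (simp add: power2_eq_square)
    have "0 \<le> t\<^sup>2" by simp
    then show ?thesis using s e1 e2 unfolding t_def[symmetric] by linarith
  qed
  let ?X = "(\<Sum>i\<in>?S2. \<Sum>j\<in>?S2. (vnorm L d (RR L d (PA j) (RR L d (PA i) \<psi>)))\<^sup>2)"
  let ?H = "vnorm L d (apply_op L d (H0 L G) \<psi>)"
  have "(vnorm L d (\<lambda>\<sigma>. \<Sum>A\<in>?Sq. apply_op L d (WA A) \<psi> \<sigma>))\<^sup>2 \<le> w\<^sup>2 * (18 * (real q)\<^sup>2)\<^sup>2 * ?H\<^sup>2"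
  proof -
    have X0: "0 \<le> ?X" by (simp add: sum_nonneg)
    have "w\<^sup>2 * (real ((2 * q + 3)\<^sup>2) * real ((q + 2)\<^sup>2) + (real ((q + 2)\<^sup>2))\<^sup>2) * ?X
        \<le> w\<^sup>2 * (18 * (real q)\<^sup>2)\<^sup>2 * ?H\<^sup>2"
      by (intro mult_mono mult_left_mono qq Nb X0) auto
    then show ?thesis using asm by linarith
  qed
  also have "\<dots> = (18 * w * (real q)\<^sup>2 * ?H)\<^sup>2" by (simp add: power_mult_distrib)
  finally have "(vnorm L d (\<lambda>\<sigma>. \<Sum>A\<in>?Sq. apply_op L d (WA A) \<psi> \<sigma>))\<^sup>2 \<le> (18 * w * (real q)\<^sup>2 * ?H)\<^sup>2" .
  then have "vnorm L d (\<lambda>\<sigma>. \<Sum>A\<in>?Sq. apply_op L d (WA A) \<psi> \<sigma>) \<le> 18 * w * (real q)\<^sup>2 * ?H"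
    by (rule power2_le_imp_le) (simp add: w0 vnorm_nonneg)
  then show "vnorm L d (\<lambda>\<sigma>. \<Sum>A\<in>?Sq. apply_op L d (WA A) \<psi> \<sigma>)
       \<le> 18 * Max ((\<lambda>A. opnorm L d (WA A)) ` ?Sq) * (real q)\<^sup>2 * ?H"
    by (simp add: w_def)
qed


end
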